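(* Let $L\in \mathbb{N}$ with $L\geq 3$, let $d,B\in \mathbb{N}$, $p,q\in [1,\infty]$, and $c\in (0,\infty)$. Suppose that the target class $U\subset C([0,1]^d)$ contains a copy of $\mathcal{H}_{(d,B,\dots , B,1),c}^q$ with constant $c_0>0$, where $B$ appears $L-1$ times in $(d,B,\dots,B,1)$; that is, there is $u_0\in U$ with $u_0+c_0\cdot \mathcal{H}_{(d,B,\dots , B,1),c}^q\subset U$. Then for every $m\in\mathbb{N}$ and every $s\in \mathbb{N}$ with $s\le \min\{\frac{B}{3},d\}$, \[ \mathrm{err}_m^{MC}(U,L^p([0,1]^d)) \geq c_0\cdot \frac{\Omega}{(64s)^{1+\frac{s}{p}}}\cdot m^{-\frac{1}{p} - \frac{1}{s}}, \] where \[ \Omega = \begin{cases} \frac{1}{4 \cdot 3^{2/q}} \cdot c^L \cdot s^{1-\frac{2}{q}} & \text{if } q\le 2, \\ \frac{1}{24} \cdot c^L\cdot (B^{1-\frac{2}{q}})^{L-1} & \text{if } q\geq 2 .\end{cases} \] (Here $1/p=0$ and $2/q=0$ when $p=\infty$, resp. $q=\infty$.)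
   Context: ReLU: $\varrho(x)=\max\{0,x\}$, applied componentwise to vectors. For an architecture $(N_0,\dots,N_L)\in\mathbb{N}^{L+1}$ and coefficients $\Phi=((W^i,b^i))_{i=1}^L$ with $W^i\in\mathbb{R}^{N_i\times N_{i-1}}$, $b^i\in\mathbb{R}^{N_i}$, the realization $R(\Phi):\mathbb{R}^{N_0}\to\mathbb{R}^{N_L}$ is $R(\Phi)(x)=x^L$ where $x^0=x$, $x^i=\varrho(W^ix^{i-1}+b^i)$ for $i\in\{1,\dots,L-1\}$, and $x^L=W^Lx^{L-1}+b^L$. For a matrix or vector, $\|\cdot\|_{\ell^q}$ is the $\ell^q$ norm of its entries (max of absolute values for $q=\infty$), and $\|\Phi\|_{\ell^q}=\max_{1\le i\le L}\max\{\|W^i\|_{\ell^q},\|b^i\|_{\ell^q}\}$. Define $\mathcal{H}^q_{(N_0,\dots,N_L),c}=\{R(\Phi): \|\Phi\|_{\ell^q}\le c\}$ (functions restricted to $[0,1]^d$ where relevant). Algorithms: Let $Y$ be a Banach space and $U\subset C([0,1]^d)\cap Y$. A map $A:U\to Y$ is an adaptive deterministic method using $m$ point samples if there are $f_1\in[0,1]^d$, maps $f_i:([0,1]^d)^{i-1}\times\mathbb{R}^{i-1}\to[0,1]^d$ ($i=2,\dots,m$) and $Q:([0,1]^d)^m\times\mathbb{R}^m\to Y$ such that for every $u\in U$, with $x_1=f_1$ and $x_i=f_i(x_1,\dots,x_{i-1},u(x_1),\dots,u(x_{i-1}))$, one has $A(u)=Q(x_1,\dots,x_m,u(x_1),\dots,u(x_m))$;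 the set of these is $\mathrm{Alg}_m(U,Y)$. An adaptive random method using $m$ point samples on average is a pair $(\mathbf{A},\mathbf{m})$ with $\mathbf{A}=(A_\omega)_{\omega\in\Omega}$ over a probability space $(\Omega,\mathcal{F},\mathbb{P})$ and $\mathbf{m}:\Omega\to\mathbb{N}$ measurable with $\mathbb{E}[\mathbf{m}]\le m$, such that $\omega\mapsto A_\omega(u)$ is Borel measurable for every $u\in U$ and $A_\omega\in\mathrm{Alg}_{\mathbf{m}(\omega)}(U,Y)$ for every $\omega$; the set of these is $\mathrm{Alg}^{MC}_m(U,Y)$. The optimal randomized error is $\mathrm{err}^{MC}_m(U,Y)=\inf_{(\mathbf{A},\mathbf{m})\in\mathrm{Alg}^{MC}_m(U,Y)}\sup_{u\in U}\mathbb{E}[\|u-A_\omega(u)\|_Y]$. *)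

theory Defs
  imports "HOL-Analysis.Analysis" "HOL-Probability.Probability"
begin

(* Exponents p, q \<in> [1,\<infinity>] are extended reals.  inv_exp p = 1/p, with 1/\<infinity> = 0. *)
definition inv_exp :: "ereal \<Rightarrow> real" where
  "inv_exp p = (if p = \<infinity> then 0 else 1 / real_of_ereal p)"

(* Points of R^d are functions nat \<Rightarrow> real; only coordinates < d matter. *)
definition relu :: "real \<Rightarrow> real" where
  "relu x = max 0 x"

definition affine :: "(nat \<Rightarrow> nat \<Rightarrow> real) \<Rightarrow> (nat \<Rightarrow> real) \<Rightarrow> nat \<Rightarrow> (nat \<Rightarrow> real) \<Rightarrow> (nat \<Rightarrow> real)" where
  "affine W b n_in x = (\<lambda>i. (\<Sum>j<n_in. W i j * x j) + b i)"

fun realize :: "nat list \<Rightarrow> ((nat \<Rightarrow> nat \<Rightarrow> real) \<times> (nat \<Rightarrow> real)) list \<Rightarrow> (nat \<Rightarrow> real) \<Rightarrow> (nat \<Rightarrow> real)" where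
  "realize (n0 # n1 # ns) ((W, b) # \<Phi>) x =
     (if ns = [] then affine W b n0 x
      else realize (n1 # ns) \<Phi> (\<lambda>i. relu (affine W b n0 x i)))"
| "realize _ _ x = x"

definition lq_norm :: "ereal \<Rightarrow> 'i set \<Rightarrow> ('i \<Rightarrow> real) \<Rightarrow> real" where
  "lq_norm q I a = (if q = \<infinity> then (if I = {} then 0 else Max ((\<lambda>i. \<bar>a i\<bar>) ` I))
                    else (\<Sum>i\<in>I. \<bar>a i\<bar> powr real_of_ereal q) powr (1 / real_of_ereal q))"

definition coeff_norm :: "ereal \<Rightarrow> nat list \<Rightarrow> ((nat \<Rightarrow> nat \<Rightarrow> real) \<times> (nat \<Rightarrow> real)) list \<Rightarrow> real" where
  "coeff_norm q arch \<Phi> = Max ({0} \<union> (\<lambda>k. max (lq_norm q ({..<arch ! (Suc k)} \<times> {..<arch ! k}) (\<lambda>(i,j). fst (\<Phi> ! k) i j))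
                                     (lq_norm q {..<arch ! (Suc k)} (snd (\<Phi> ! k)))) ` {..<length \<Phi>})"

definition Hclass :: "ereal \<Rightarrow> nat list \<Rightarrow> real \<Rightarrow> ((nat \<Rightarrow> real) \<Rightarrow> real) set" where
  "Hclass q arch c = {(\<lambda>x. realize arch \<Phi> x 0) | \<Phi>. length \<Phi> + 1 = length arch \<and> coeff_norm q arch \<Phi> \<le> c}"

definition cube :: "nat \<Rightarrow> (nat \<Rightarrow> real) set" where
  "cube d = PiE {..<d} (\<lambda>_. {0..1})"

definition cube_measure :: "nat \<Rightarrow> (nat \<Rightarrow> real) measure" where
  "cube_measure d = PiM {..<d} (\<lambda>_. restrict_space lborel {0..1})"

definition lp_norm :: "ereal \<Rightarrow> nat \<Rightarrow> ((nat \<Rightarrow> real) \<Rightarrow> real) \<Rightarrow> ennreal" where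
  "lp_norm p d f =
     (if p = \<infinity> then e2ennreal (esssup (cube_measure d) (\<lambda>x. ereal \<bar>f x\<bar>))
      else (let I = (\<integral>\<^sup>+ x. ennreal (\<bar>f x\<bar> powr real_of_ereal p) \<partial>cube_measure d)
            in if I = \<infinity> then \<infinity> else ennreal (enn2real I powr (1 / real_of_ereal p))))"

(* L^p([0,1]^d) as a set of representatives (functions identified a.e. by the norm) *)
definition Lp_space :: "ereal \<Rightarrow> nat \<Rightarrow> ((nat \<Rightarrow> real) \<Rightarrow> real) set" where
  "Lp_space p d = {f. f \<in> borel_measurable (cube_measure d) \<and> lp_norm p d f < \<infinity>}"

definition lp_dist :: "ereal \<Rightarrow> nat \<Rightarrow> ((nat \<Rightarrow> real) \<Rightarrow> real) \<Rightarrow> ((nat \<Rightarrow> real) \<Rightarrow> real) \<Rightarrow> ennreal" where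
  "lp_dist p d f g = lp_norm p d (\<lambda>x. f x - g x)"

definition Lp_open :: "ereal \<Rightarrow> nat \<Rightarrow> ((nat \<Rightarrow> real) \<Rightarrow> real) set \<Rightarrow> bool" where
  "Lp_open p d S \<longleftrightarrow> S \<subseteq> Lp_space p d \<and>
     (\<forall>f\<in>S. \<exists>e>0. \<forall>g\<in>Lp_space p d. lp_dist p d f g < ennreal e \<longrightarrow> g \<in> S)"

(* sample points of an adaptive method: F i (points so far, values so far) is the (i+1)-th point *)
fun sample_pts :: "(nat \<Rightarrow> (nat \<Rightarrow> real) list \<Rightarrow> real list \<Rightarrow> (nat \<Rightarrow> real)) \<Rightarrow> ((nat \<Rightarrow> real) \<Rightarrow> real) \<Rightarrow> nat \<Rightarrow> (nat \<Rightarrow> real) list" where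
  "sample_pts F u 0 = []"
| "sample_pts F u (Suc i) = (let xs = sample_pts F u i in xs @ [F i xs (map u xs)])"

definition Alg :: "nat \<Rightarrow> ((nat \<Rightarrow> real) \<Rightarrow> real) set \<Rightarrow> ereal \<Rightarrow> nat \<Rightarrow>
     (((nat \<Rightarrow> real) \<Rightarrow> real) \<Rightarrow> ((nat \<Rightarrow> real) \<Rightarrow> real)) set" where
  "Alg m U p d = {A. (\<forall>u\<in>U. A u \<in> Lp_space p d) \<and>
     (\<exists>F Q. (\<forall>i xs ys. F i xs ys \<in> cube d) \<and>
            (\<forall>u\<in>U. A u = Q (sample_pts F u m) (map u (sample_pts F u m))))}"

definition Alg_MC :: "nat \<Rightarrow> ((nat \<Rightarrow> real) \<Rightarrow> real) set \<Rightarrow> ereal \<Rightarrow> nat \<Rightarrow>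
     ('w measure \<times> ('w \<Rightarrow> ((nat \<Rightarrow> real) \<Rightarrow> real) \<Rightarrow> ((nat \<Rightarrow> real) \<Rightarrow> real)) \<times> ('w \<Rightarrow> nat)) set" where
  "Alg_MC m U p d = {(P, A, mm). prob_space P \<and>
     mm \<in> measurable P (count_space UNIV) \<and>
     (\<integral>\<^sup>+ \<omega>. ennreal (real (mm \<omega>)) \<partial>P) \<le> ennreal (real m) \<and>
     (\<forall>u\<in>U. \<forall>S. Lp_open p d S \<longrightarrow> {\<omega>\<in>space P. A \<omega> u \<in> S} \<in> sets P) \<and>
     (\<forall>\<omega>\<in>space P. A \<omega> \<in> Alg (mm \<omega>) U p d)}"

definition mc_worst_error :: "'w measure \<Rightarrow> ('w \<Rightarrow> ((nat \<Rightarrow> real) \<Rightarrow> real) \<Rightarrow> ((nat \<Rightarrow> real) \<Rightarrow> real)) \<Rightarrow>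
     ((nat \<Rightarrow> real) \<Rightarrow> real) set \<Rightarrow> ereal \<Rightarrow> nat \<Rightarrow> ennreal" where
  "mc_worst_error P A U p d = (SUP u\<in>U. \<integral>\<^sup>+ \<omega>. lp_dist p d u (A \<omega> u) \<partial>P)"

(* err^MC_m(U, L^p([0,1]^d)), the infimum ranging over methods on probability spaces whose sample type is 'w *)
definition err_MC :: "'w itself \<Rightarrow> nat \<Rightarrow> ((nat \<Rightarrow> real) \<Rightarrow> real) set \<Rightarrow> ereal \<Rightarrow> nat \<Rightarrow> ennreal" where
  "err_MC _ m U p d = (INF (P, A, mm) \<in> (Alg_MC m U p d :: ('w measure \<times> _ \<times> _) set). mc_worst_error P A U p d)"

end

theory Submission
  imports Defs
begin

abbreviation "I01 \<equiv> restrict_space lborel {0..1::real}"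

lemma prob_I01: "prob_space I01"
  by (intro prob_spaceI) (simp add: emeasure_restrict_space space_restrict_space)

lemma space_cube: "space (cube_measure d) = cube d"
  by (simp add: cube_measure_def cube_def space_PiM space_restrict_space)

lemma prob_cube: "prob_space (cube_measure d)"
  unfolding cube_measure_def by (rule prob_space_PiM) (rule prob_I01)

lemma psf_I01: "product_sigma_finite (\<lambda>_. I01)"
proof -
  interpret prob_space I01 by (rule prob_I01)
  show "product_sigma_finite (\<lambda>_. I01)"
    unfolding product_sigma_finite_def by (auto intro: sigma_finite_measure)
qed

lemma inv_exp_fin: "p \<noteq> \<infinity> \<Longrightarrow> inv_exp p = 1 / real_of_ereal p"
  by (simp add: inv_exp_def)

lemma real_of_ereal_ge1: "1 \<le> p \<Longrightarrow> p \<noteq> \<infinity> \<Longrightarrow> 1 \<le> real_of_ereal p"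
  by (cases p) auto

lemma lp_norm_lower:
  assumes p: "1 \<le> p" and E: "E \<in> sets (cube_measure d)" and mE: "measure (cube_measure d) E > 0"
    and h: "h \<ge> 0" and fE: "\<And>x. x \<in> E \<Longrightarrow> h \<le> \<bar>f x\<bar>"
  shows "ennreal (h * measure (cube_measure d) E powr inv_exp p) \<le> lp_norm p d f"
proof -
  let ?M = "cube_measure d"
  interpret P: prob_space ?M by (rule prob_cube)
  have eE: "emeasure ?M E = ennreal (measure ?M E)"
    using P.emeasure_eq_measure by blast
  show ?thesis
  proof (cases "p = \<infinity>")
    case True
    have "ereal h \<le> esssup ?M (\<lambda>x. ereal \<bar>f x\<bar>)"
    proof (cases "(\<lambda>x. ereal \<bar>f x\<bar>) \<in> borel_measurable ?M")
      case False
      then show ?thesis by (simp add: esssup_non_measurable)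
    next
      case meas: True
      show ?thesis
      proof (rule ccontr)
        assume "\<not> ?thesis"
        then have lt: "esssup ?M (\<lambda>x. ereal \<bar>f x\<bar>) < ereal h" by simp
        have "AE x in ?M. ereal \<bar>f x\<bar> \<le> esssup ?M (\<lambda>x. ereal \<bar>f x\<bar>)" by (rule esssup_AE)
        then obtain N where N: "N \<in> null_sets ?M"
          and sub: "{x \<in> space ?M. \<not> ereal \<bar>f x\<bar> \<le> esssup ?M (\<lambda>x. ereal \<bar>f x\<bar>)} \<subseteq> N"
          by (auto elim!: AE_E)
        have "E \<subseteq> N"
        proof
          fix x assume x: "x \<in> E"
          then have "x \<in> space ?M" using E sets.sets_into_space by blast
          moreover have "\<not> ereal \<bar>f x\<bar> \<le> esssup ?M (\<lambda>x. ereal \<bar>f x\<bar>)"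
            using fE[OF x] lt by (meson ereal_less_eq(3) leD order_le_less_trans)
          ultimately show "x \<in> N" using sub by blast
        qed
        then have "emeasure ?M E \<le> emeasure ?M N" by (intro emeasure_mono) (use N in auto)
        then have "emeasure ?M E = 0" using N by auto
        then show False using mE eE by simp
      qed
    qed
    then have "e2ennreal (ereal h) \<le> e2ennreal (esssup ?M (\<lambda>x. ereal \<bar>f x\<bar>))"
      by (rule e2ennreal_mono)
    moreover have "lp_norm p d f = e2ennreal (esssup ?M (\<lambda>x. ereal \<bar>f x\<bar>))"
      by (simp only: lp_norm_def if_P[OF True])
    moreover have "h * measure ?M E powr inv_exp p = h"
      using True mE by (simp add: inv_exp_def)
    ultimately show ?thesis by (simp only: e2ennreal_ereal)
  next
    case False
    define r where "r = real_of_ereal p"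
    have r1: "1 \<le> r" using real_of_ereal_ge1[OF p False] r_def by simp
    define I where "I = (\<integral>\<^sup>+ x. ennreal (\<bar>f x\<bar> powr r) \<partial>?M)"
    have "(\<integral>\<^sup>+ x. ennreal (h powr r) * indicator E x \<partial>?M) \<le> I"
      unfolding I_def
    proof (rule nn_integral_mono)
      fix x assume "x \<in> space ?M"
      show "ennreal (h powr r) * indicator E x \<le> ennreal (\<bar>f x\<bar> powr r)"
        using fE[of x] h r1 by (cases "x \<in> E") (auto intro!: ennreal_leI powr_mono2)
    qed
    then have low: "ennreal (h powr r * measure ?M E) \<le> I"
      using E eE by (simp add: nn_integral_cmult_indicator ennreal_mult)
    show ?thesis
    proof (cases "I = \<infinity>")
      case True
      then show ?thesis using False by (simp add: lp_norm_def Let_def r_def I_def)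
    next
      case fin: False
      have "h powr r * measure ?M E \<le> enn2real I"
        proof -
        have "enn2real (ennreal (h powr r * measure ?M E)) \<le> enn2real I"
          using low fin by (intro enn2real_mono) (auto simp: top.not_eq_extremum)
        then show ?thesis by simp
      qed
      then have "(h powr r * measure ?M E) powr (1/r) \<le> enn2real I powr (1/r)"
        using r1 by (intro powr_mono2) auto
      moreover have "(h powr r * measure ?M E) powr (1/r) = h * measure ?M E powr (1/r)"
        using r1 h by (simp add: powr_mult powr_powr)
      ultimately show ?thesis using False fin
        by (simp add: lp_norm_def Let_def r_def[symmetric] I_def[symmetric] inv_exp_def ennreal_leI)
    qed
  qed
qed

lemma convex_powr_ineq:
  fixes t x y r :: real
  assumes t: "0 \<le> t" "t \<le> 1" and xy: "0 \<le> x" "0 \<le> y" and r: "1 \<le> r"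
  shows "(t * x + (1 - t) * y) powr r \<le> t * x powr r + (1 - t) * y powr r"
proof (cases "x > 0 \<and> y > 0")
  case True
  have "convex_on {0<..} (\<lambda>x::real. x powr r)" by (rule powr_convex[OF r])
  from convex_onD[OF this, of "1 - t" x y] True t
  show ?thesis by (simp add: algebra_simps)
next
  case False
  have pw: "a powr r \<le> a" if "0 \<le> a" "a \<le> 1" for a :: real
  proof (cases "a = 0")
    case False
    then have "a powr r \<le> a powr 1" using that r by (intro powr_mono') auto
    then show ?thesis using that by simp
  qed simp
  show ?thesis
  proof (cases "x = 0")
    case True
    have "((1 - t) * y) powr r = (1 - t) powr r * y powr r" using t xy by (simp add: powr_mult)
    also have "\<dots> \<le> (1 - t) * y powr r" using pw[of "1 - t"] t by (intro mult_right_mono) auto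
    finally show ?thesis using True r by simp
  next
    case x0: False
    then have "y = 0" using False xy by auto
    have "(t * x) powr r = t powr r * x powr r" using t xy by (simp add: powr_mult)
    also have "\<dots> \<le> t * x powr r" using pw[of t] t by (intro mult_right_mono) auto
    finally show ?thesis using \<open>y = 0\<close> r by simp
  qed
qed

lemma minkowski_nn:
  fixes M :: "'a measure" and F G :: "'a \<Rightarrow> real"
  assumes r: "1 \<le> r" and FM[measurable]: "F \<in> borel_measurable M" and GM[measurable]: "G \<in> borel_measurable M"
    and F0: "\<And>x. 0 \<le> F x" and G0: "\<And>x. 0 \<le> G x"
    and IF: "(\<integral>\<^sup>+x. ennreal (F x powr r) \<partial>M) \<noteq> \<infinity>"
    and IG: "(\<integral>\<^sup>+x. ennreal (G x powr r) \<partial>M) \<noteq> \<infinity>"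
  shows "(\<integral>\<^sup>+x. ennreal ((F x + G x) powr r) \<partial>M) \<noteq> \<infinity> \<and>
         enn2real (\<integral>\<^sup>+x. ennreal ((F x + G x) powr r) \<partial>M) powr (1/r)
           \<le> enn2real (\<integral>\<^sup>+x. ennreal (F x powr r) \<partial>M) powr (1/r)
             + enn2real (\<integral>\<^sup>+x. ennreal (G x powr r) \<partial>M) powr (1/r)"
proof -
  define IFv where "IFv = (\<integral>\<^sup>+x. ennreal (F x powr r) \<partial>M)"
  define IGv where "IGv = (\<integral>\<^sup>+x. ennreal (G x powr r) \<partial>M)"
  define IS where "IS = (\<integral>\<^sup>+x. ennreal ((F x + G x) powr r) \<partial>M)"
  define a where "a = enn2real IFv powr (1/r)"
  define b where "b = enn2real IGv powr (1/r)"
  have a0: "0 \<le> a" and b0: "0 \<le> b" by (auto simp: a_def b_def)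
  have IFe: "IFv = ennreal (a powr r)"
    using IF r by (simp add: a_def IFv_def powr_powr ennreal_enn2real_if)
  have IGe: "IGv = ennreal (b powr r)"
    using IG r by (simp add: b_def IGv_def powr_powr ennreal_enn2real_if)
  have key: "IS \<le> ennreal ((a + b + 2 * e) powr r)" if e: "e > 0" for e
  proof -
    define A where "A = a + e"
    define Bb where "Bb = b + e"
    define S where "S = A + Bb"
    define t where "t = A / S"
    have A0: "A > 0" and B0: "Bb > 0" and S0: "S > 0" using a0 b0 e by (auto simp: A_def Bb_def S_def)
    have t01: "0 \<le> t" "t \<le> 1" using A0 B0 by (auto simp: t_def S_def)
    have omt: "1 - t = Bb / S" using A0 B0 by (simp add: t_def S_def field_simps)
    define k1 where "k1 = S powr r * t / A powr r"
    define k2 where "k2 = S powr r * (1 - t) / Bb powr r"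
    have k10: "0 \<le> k1" and k20: "0 \<le> k2" using t01 by (auto simp: k1_def k2_def)
    have pt: "(F x + G x) powr r \<le> k1 * F x powr r + k2 * G x powr r" for x
    proof -
      have "S * (t * (F x / A) + (1 - t) * (G x / Bb)) = F x + G x"
      proof -
        have h1: "A / S * (F x / A) = F x / S" using A0 by simp
        have h2: "Bb / S * (G x / Bb) = G x / S" using B0 by simp
        have h3: "S * (F x / S + G x / S) = F x + G x" using S0 by (simp add: field_simps)
        show ?thesis by (subst omt, unfold t_def, simp only: h1 h2 h3)
      qed
      then have "F x + G x = S * (t * (F x / A) + (1 - t) * (G x / Bb))" by simp
      then have "(F x + G x) powr r = S powr r * (t * (F x / A) + (1 - t) * (G x / Bb)) powr r"
        using S0 A0 B0 t01 F0[of x] G0[of x] by (simp add: powr_mult)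
      also have "\<dots> \<le> S powr r * (t * (F x / A) powr r + (1 - t) * (G x / Bb) powr r)"
        using convex_powr_ineq[OF t01, of "F x / A" "G x / Bb" r] A0 B0 F0[of x] G0[of x] r
        by (intro mult_left_mono) auto
      also have "\<dots> = k1 * F x powr r + k2 * G x powr r"
        using A0 B0 F0[of x] G0[of x] by (simp add: k1_def k2_def powr_divide field_simps)
      finally show ?thesis .
    qed
    have "IS \<le> (\<integral>\<^sup>+x. ennreal k1 * ennreal (F x powr r) + ennreal k2 * ennreal (G x powr r) \<partial>M)"
      unfolding IS_def
    proof (rule nn_integral_mono)
      fix x
      have "ennreal ((F x + G x) powr r) \<le> ennreal (k1 * F x powr r + k2 * G x powr r)"
        by (rule ennreal_leI[OF pt])
      also have "\<dots> = ennreal k1 * ennreal (F x powr r) + ennreal k2 * ennreal (G x powr r)"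
        using k10 k20 by (simp add: ennreal_mult ennreal_plus)
      finally show "ennreal ((F x + G x) powr r) \<le> ennreal k1 * ennreal (F x powr r) + ennreal k2 * ennreal (G x powr r)" .
    qed
    also have "\<dots> = ennreal k1 * IFv + ennreal k2 * IGv"
      unfolding IFv_def IGv_def by (simp add: nn_integral_add nn_integral_cmult)
    also have "\<dots> = ennreal (k1 * a powr r + k2 * b powr r)"
      using k10 k20 by (simp add: IFe IGe ennreal_mult ennreal_plus)
    also have "\<dots> \<le> ennreal (k1 * A powr r + k2 * Bb powr r)"
      using k10 k20 a0 b0 r e by (intro ennreal_leI add_mono mult_left_mono powr_mono2) (auto simp: A_def Bb_def)
    also have "k1 * A powr r + k2 * Bb powr r = S powr r"
    proof -
      have "k1 * A powr r = S powr r * t" using A0 by (simp add: k1_def)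
      moreover have "k2 * Bb powr r = S powr r * (1 - t)" using B0 by (simp add: k2_def)
      ultimately show ?thesis by (simp add: algebra_simps)
    qed
    also have "S = a + b + 2 * e" by (simp add: S_def A_def Bb_def)
    finally show ?thesis .
  qed
  have fin: "IS \<noteq> \<infinity>" using key[of 1] by (auto simp: top_unique)
  have "enn2real IS powr (1/r) \<le> a + b + e" if e: "e > 0" for e
  proof -
    have "enn2real IS \<le> (a + b + 2 * (e/2)) powr r"
      using key[of "e/2"] e fin by (simp add: enn2real_leI)
    then have "enn2real IS powr (1/r) \<le> ((a + b + 2 * (e/2)) powr r) powr (1/r)"
      using r by (intro powr_mono2) auto
    also have "\<dots> = a + b + e" using r a0 b0 e by (simp add: powr_powr)
    finally show ?thesis .
  qed
  then have "enn2real IS powr (1/r) \<le> a + b" by (rule field_le_epsilon)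
  then show ?thesis using fin by (simp add: IS_def a_def b_def IFv_def IGv_def)
qed

lemma e2ennreal_add_le:
  assumes "0 \<le> x" "0 \<le> y" shows "e2ennreal (x + y) \<le> e2ennreal x + e2ennreal y"
  using assms by (cases x; cases y) (auto simp: ennreal_plus)

lemma esssup_nonneg_cube:
  assumes "(\<lambda>x. ereal \<bar>f x\<bar>) \<in> borel_measurable (cube_measure d)"
  shows "0 \<le> esssup (cube_measure d) (\<lambda>x. ereal \<bar>f x\<bar>)"
proof -
  interpret P: prob_space "cube_measure d" by (rule prob_cube)
  have "esssup (cube_measure d) (\<lambda>x. 0::ereal) \<le> esssup (cube_measure d) (\<lambda>x. ereal \<bar>f x\<bar>)"
    by (rule esssup_mono) auto
  moreover have "esssup (cube_measure d) (\<lambda>x. 0::ereal) = 0"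
    by (rule esssup_const) (simp add: P.emeasure_space_1)
  ultimately show ?thesis by simp
qed

lemma lp_norm_triangle:
  assumes p: "1 \<le> p" and f[measurable]: "f \<in> borel_measurable (cube_measure d)"
    and g[measurable]: "g \<in> borel_measurable (cube_measure d)"
  shows "lp_norm p d (\<lambda>x. f x + g x) \<le> lp_norm p d f + lp_norm p d g"
proof (cases "p = \<infinity>")
  case True
  let ?M = "cube_measure d"
  have "esssup ?M (\<lambda>x. ereal \<bar>f x + g x\<bar>) \<le> esssup ?M (\<lambda>x. ereal \<bar>f x\<bar> + ereal \<bar>g x\<bar>)"
    by (rule esssup_mono) auto
  also have "\<dots> \<le> esssup ?M (\<lambda>x. ereal \<bar>f x\<bar>) + esssup ?M (\<lambda>x. ereal \<bar>g x\<bar>)"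
    by (rule esssup_add)
  finally have "e2ennreal (esssup ?M (\<lambda>x. ereal \<bar>f x + g x\<bar>)) \<le>
      e2ennreal (esssup ?M (\<lambda>x. ereal \<bar>f x\<bar>) + esssup ?M (\<lambda>x. ereal \<bar>g x\<bar>))"
    by (rule e2ennreal_mono)
  also have "\<dots> \<le> e2ennreal (esssup ?M (\<lambda>x. ereal \<bar>f x\<bar>)) + e2ennreal (esssup ?M (\<lambda>x. ereal \<bar>g x\<bar>))"
    by (rule e2ennreal_add_le) (rule esssup_nonneg_cube, measurable)+
  finally show ?thesis by (simp only: lp_norm_def if_P[OF True])
next
  case False
  let ?M = "cube_measure d"
  define r where "r = real_of_ereal p"
  have r1: "1 \<le> r" using real_of_ereal_ge1[OF p False] r_def by simp
  define IF where "IF = (\<integral>\<^sup>+ x. ennreal (\<bar>f x\<bar> powr r) \<partial>?M)"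
  define IG where "IG = (\<integral>\<^sup>+ x. ennreal (\<bar>g x\<bar> powr r) \<partial>?M)"
  define IFG where "IFG = (\<integral>\<^sup>+ x. ennreal (\<bar>f x + g x\<bar> powr r) \<partial>?M)"
  have eqf: "lp_norm p d f = (if IF = \<infinity> then \<infinity> else ennreal (enn2real IF powr (1 / r)))"
    using False by (simp add: lp_norm_def Let_def r_def IF_def)
  have eqg: "lp_norm p d g = (if IG = \<infinity> then \<infinity> else ennreal (enn2real IG powr (1 / r)))"
    using False by (simp add: lp_norm_def Let_def r_def IG_def)
  have eqfg: "lp_norm p d (\<lambda>x. f x + g x) = (if IFG = \<infinity> then \<infinity> else ennreal (enn2real IFG powr (1 / r)))"
    using False by (simp add: lp_norm_def Let_def r_def IFG_def)
  show ?thesis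
  proof (cases "IF = \<infinity> \<or> IG = \<infinity>")
    case True
    then show ?thesis using eqf eqg by auto
  next
    case fin: False
    have M: "(\<integral>\<^sup>+x. ennreal ((\<bar>f x\<bar> + \<bar>g x\<bar>) powr r) \<partial>?M) \<noteq> \<infinity> \<and>
         enn2real (\<integral>\<^sup>+x. ennreal ((\<bar>f x\<bar> + \<bar>g x\<bar>) powr r) \<partial>?M) powr (1/r)
           \<le> enn2real IF powr (1/r) + enn2real IG powr (1/r)"
      unfolding IF_def IG_def
      by (rule minkowski_nn[OF r1]) (use fin in \<open>auto simp: IF_def IG_def\<close>)
    define IS where "IS = (\<integral>\<^sup>+x. ennreal ((\<bar>f x\<bar> + \<bar>g x\<bar>) powr r) \<partial>?M)"
    have le: "IFG \<le> IS" unfolding IFG_def IS_def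
      using r1 by (intro nn_integral_mono ennreal_leI powr_mono2) auto
    have ISfin: "IS \<noteq> \<infinity>" using M by (simp add: IS_def)
    then have IFGfin: "IFG \<noteq> \<infinity>" using le by (auto simp: top_unique)
    have "enn2real IFG \<le> enn2real IS" using le ISfin by (simp add: enn2real_mono top.not_eq_extremum)
    then have "enn2real IFG powr (1/r) \<le> enn2real IS powr (1/r)"
      using r1 by (intro powr_mono2) auto
    also have "\<dots> \<le> enn2real IF powr (1/r) + enn2real IG powr (1/r)" using M by (simp add: IS_def)
    finally have "ennreal (enn2real IFG powr (1/r)) \<le> ennreal (enn2real IF powr (1/r)) + ennreal (enn2real IG powr (1/r))"
      by (simp add: ennreal_plus[symmetric] ennreal_leI del: ennreal_plus)
    then show ?thesis using eqf eqg eqfg fin IFGfin by simp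
  qed
qed

lemma lp_norm_uminus: "lp_norm p d (\<lambda>x. - f x) = lp_norm p d f"
  by (simp add: lp_norm_def)

lemma lp_dist_sym: "lp_dist p d f g = lp_dist p d g f"
  by (simp add: lp_dist_def lp_norm_def abs_minus_commute)

lemma lp_dist_tri:
  assumes p: "1 \<le> p" and [measurable]: "f \<in> borel_measurable (cube_measure d)"
    "g \<in> borel_measurable (cube_measure d)" "h \<in> borel_measurable (cube_measure d)"
  shows "lp_dist p d f h \<le> lp_dist p d f g + lp_dist p d g h"
proof -
  have "lp_dist p d f h = lp_norm p d (\<lambda>x. (f x - g x) + (g x - h x))"
    by (simp add: lp_dist_def)
  also have "\<dots> \<le> lp_norm p d (\<lambda>x. f x - g x) + lp_norm p d (\<lambda>x. g x - h x)"
    by (rule lp_norm_triangle[OF p]) measurable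
  finally show ?thesis by (simp add: lp_dist_def)
qed

lemma lp_dist_fin:
  assumes p: "1 \<le> p" and "f \<in> Lp_space p d" "g \<in> Lp_space p d"
  shows "lp_dist p d f g < \<infinity>"
proof -
  have "lp_dist p d f g = lp_norm p d (\<lambda>x. f x + (- g x))" by (simp add: lp_dist_def)
  also have "\<dots> \<le> lp_norm p d f + lp_norm p d (\<lambda>x. - g x)"
    using assms by (intro lp_norm_triangle[OF p]) (auto simp: Lp_space_def)
  also have "\<dots> < \<infinity>" using assms by (simp add: lp_norm_uminus Lp_space_def)
  finally show ?thesis .
qed

lemma ennreal_gap:
  fixes t y D :: ennreal
  assumes "y < t" "t < \<infinity>" "t < D + (t - y)"
  shows "y < D"
proof (rule ccontr)
  assume "\<not> y < D"
  then have "D + (t - y) \<le> y + (t - y)" by (intro add_right_mono) simp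
  also have "y + (t - y) = t" using assms(1) by (simp add: add_diff_inverse_ennreal less_imp_le)
  finally show False using assms(3) by simp
qed

lemma meas_dist:
  assumes p: "1 \<le> p" and u: "u \<in> Lp_space p d"
    and hyp: "\<forall>S. Lp_open p d S \<longrightarrow> {\<omega>\<in>space P. Af \<omega> \<in> S} \<in> sets P"
    and inL: "\<forall>\<omega>\<in>space P. Af \<omega> \<in> Lp_space p d"
  shows "(\<lambda>\<omega>. lp_dist p d u (Af \<omega>)) \<in> borel_measurable P"
proof (rule borel_measurableI_greater)
  fix y :: ennreal
  define S where "S = {g \<in> Lp_space p d. y < lp_dist p d u g}"
  have meas: "\<And>f. f \<in> Lp_space p d \<Longrightarrow> f \<in> borel_measurable (cube_measure d)"
    by (simp add: Lp_space_def)
  have "Lp_open p d S"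
    unfolding Lp_open_def
  proof (intro conjI ballI)
    show "S \<subseteq> Lp_space p d" by (auto simp: S_def)
  next
    fix g assume g: "g \<in> S"
    define t where "t = lp_dist p d u g"
    have gL: "g \<in> Lp_space p d" and yt: "y < t" using g by (auto simp: S_def t_def)
    have tfin: "t < \<infinity>" using lp_dist_fin[OF p u gL] by (simp add: t_def)
    define e where "e = enn2real (t - y)"
    have tyfin: "t - y < \<infinity>" using tfin by (metis diff_le_self_ennreal le_less_trans)
    have ee: "ennreal e = t - y" using tyfin by (simp add: e_def less_top)
    have epos: "e > 0" using yt tyfin by (simp add: e_def enn2real_positive_iff diff_gr0_ennreal less_top)
    show "\<exists>e>0. \<forall>g'\<in>Lp_space p d. lp_dist p d g g' < ennreal e \<longrightarrow> g' \<in> S"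
    proof (intro exI[of _ e] conjI ballI impI)
      show "0 < e" by (rule epos)
    next
      fix g' assume g'L: "g' \<in> Lp_space p d" and close: "lp_dist p d g g' < ennreal e"
      have "t \<le> lp_dist p d u g' + lp_dist p d g' g"
        unfolding t_def by (rule lp_dist_tri[OF p]) (use meas u gL g'L in auto)
      also have "\<dots> < lp_dist p d u g' + (t - y)"
        using close ee lp_dist_fin[OF p u g'L] by (simp add: lp_dist_sym[of p d g' g] ennreal_add_left_cancel_less less_top)
      finally have "y < lp_dist p d u g'" by (rule ennreal_gap[OF yt tfin])
      then show "g' \<in> S" using g'L by (simp add: S_def)
    qed
  qed
  then have "{\<omega>\<in>space P. Af \<omega> \<in> S} \<in> sets P" using hyp by blast
  moreover have "{\<omega>\<in>space P. Af \<omega> \<in> S} = {\<omega>\<in>space P. y < lp_dist p d u (Af \<omega>)}"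
    using inL by (auto simp: S_def)
  ultimately show "{\<omega>\<in>space P. y < lp_dist p d u (Af \<omega>)} \<in> sets P" by simp
qed

lemma sample_pts_len: "length (sample_pts F u n) = n"
  by (induction n) (simp_all add: Let_def)

lemma sample_pts_mono: "i \<le> n \<Longrightarrow> set (sample_pts F u i) \<subseteq> set (sample_pts F u n)"
proof (induction n)
  case 0 then show ?case by simp
next
  case (Suc n)
  then show ?case by (cases "i = Suc n") (auto simp: Let_def)
qed

lemma sample_pts_in: "(\<forall>i xs ys. F i xs ys \<in> C) \<Longrightarrow> set (sample_pts F u n) \<subseteq> C"
  by (induction n) (auto simp: Let_def)

lemma sample_pts_agree:
  assumes "\<forall>x\<in>set (sample_pts F u n). v x = u x"
  shows "sample_pts F v n = sample_pts F u n"
proof -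
  have "\<forall>i. i \<le> n \<longrightarrow> sample_pts F v i = sample_pts F u i"
  proof (intro allI)
    fix i show "i \<le> n \<longrightarrow> sample_pts F v i = sample_pts F u i"
    proof (induction i)
      case 0 then show ?case by simp
    next
      case (Suc i)
      show ?case
      proof
        assume le: "Suc i \<le> n"
        then have IH: "sample_pts F v i = sample_pts F u i" using Suc by simp
        have "set (sample_pts F u i) \<subseteq> set (sample_pts F u n)" using le by (intro sample_pts_mono) simp
        then have mapeq: "map v (sample_pts F u i) = map u (sample_pts F u i)" using assms by auto
        show "sample_pts F v (Suc i) = sample_pts F u (Suc i)" unfolding sample_pts.simps Let_def IH mapeq ..
      qed
    qed
  qed
  then show ?thesis by simp
qed

lemma alg_pts:
  assumes A: "A \<in> Alg n U p d" and u0: "u0 \<in> U"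
  shows "\<exists>X. finite X \<and> card X \<le> n \<and> X \<subseteq> cube d \<and>
            (\<forall>v\<in>U. (\<forall>x\<in>X. v x = u0 x) \<longrightarrow> A v = A u0)"
proof -
  obtain F Q where F: "\<forall>i xs ys. F i xs ys \<in> cube d"
    and AQ: "\<forall>u\<in>U. A u = Q (sample_pts F u n) (map u (sample_pts F u n))"
    using A unfolding Alg_def by blast
  define X where "X = set (sample_pts F u0 n)"
  have "card X \<le> n" unfolding X_def using card_length[of "sample_pts F u0 n"] by (simp add: sample_pts_len)
  moreover have "X \<subseteq> cube d" unfolding X_def by (rule sample_pts_in[OF F])
  moreover have "A v = A u0" if v: "v \<in> U" and agree: "\<forall>x\<in>X. v x = u0 x" for v
  proof -
    have eq: "sample_pts F v n = sample_pts F u0 n" using agree by (intro sample_pts_agree) (simp add: X_def)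
    have mapeq: "map v (sample_pts F u0 n) = map u0 (sample_pts F u0 n)" using agree by (simp add: X_def)
    have "A v = Q (sample_pts F v n) (map v (sample_pts F v n))" using AQ v by blast
    also have "\<dots> = Q (sample_pts F u0 n) (map u0 (sample_pts F u0 n))" unfolding eq mapeq ..
    also have "\<dots> = A u0" using AQ u0 by simp
    finally show ?thesis .
  qed
  ultimately show ?thesis by (intro exI[of _ X]) (auto simp: X_def)
qed

lemma card_hit_le:
  assumes fin: "finite X" and disj: "\<forall>k\<in>K. \<forall>k'\<in>K. k \<noteq> k' \<longrightarrow> supp k \<inter> supp k' = {}"
  shows "card {k\<in>K. X \<inter> supp k \<noteq> {}} \<le> card X"
proof -
  define Sm where "Sm = {k\<in>K. X \<inter> supp k \<noteq> {}}"
  define f where "f k = (SOME x. x \<in> X \<inter> supp k)" for k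
  have f: "f k \<in> X \<inter> supp k" if "k \<in> Sm" for k
  proof -
    have "\<exists>x. x \<in> X \<inter> supp k" using that by (auto simp: Sm_def)
    then show ?thesis unfolding f_def by (rule someI_ex)
  qed
  have "inj_on f Sm"
  proof (rule inj_onI)
    fix k k' assume k: "k \<in> Sm" and k': "k' \<in> Sm" and eq: "f k = f k'"
    show "k = k'"
    proof (rule ccontr)
      assume "k \<noteq> k'"
      then have "supp k \<inter> supp k' = {}" using disj k k' by (auto simp: Sm_def)
      then show False using f[OF k] f[OF k'] eq by auto
    qed
  qed
  moreover have "f ` Sm \<subseteq> X" using f by auto
  ultimately have "card Sm \<le> card X" by (rule card_inj_on_le[OF _ _ fin])
  then show ?thesis by (simp add: Sm_def)
qed

lemma pointwise_bound:
  fixes Kset :: "'k set" and v :: "'k \<Rightarrow> (nat \<Rightarrow> real) \<Rightarrow> real" and D :: real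
  assumes p: "1 \<le> p" and finK: "finite Kset"
    and UL: "\<forall>u\<in>U. u \<in> Lp_space p d" and u0: "u0 \<in> U" and vU: "\<forall>k\<in>Kset. v k \<in> U"
    and agree: "\<forall>k\<in>Kset. \<forall>x\<in>cube d. x \<notin> supp k \<longrightarrow> v k x = u0 x"
    and disj: "\<forall>k\<in>Kset. \<forall>k'\<in>Kset. k \<noteq> k' \<longrightarrow> supp k \<inter> supp k' = {}"
    and Dk: "\<forall>k\<in>Kset. ennreal D \<le> lp_dist p d u0 (v k)"
    and A: "A \<in> Alg n U p d"
  shows "of_nat (card Kset) * ennreal D \<le>
     of_nat (card Kset) * lp_dist p d u0 (A u0) + (\<Sum>k\<in>Kset. lp_dist p d (v k) (A (v k))) + ennreal D * of_nat n"
proof -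
  obtain X where finX: "finite X" and cX: "card X \<le> n" and Xc: "X \<subseteq> cube d"
    and XA: "\<forall>v\<in>U. (\<forall>x\<in>X. v x = u0 x) \<longrightarrow> A v = A u0"
    using alg_pts[OF A u0] by blast
  define Sm where "Sm = {k\<in>Kset. X \<inter> supp k \<noteq> {}}"
  have cSm: "card Sm \<le> n" using card_hit_le[OF finX disj] cX by (simp add: Sm_def)
  have SmK: "Sm \<subseteq> Kset" by (auto simp: Sm_def)
  have finSm: "finite Sm" using finK SmK finite_subset by blast
  define f where "f = A u0"
  define d0 where "d0 = lp_dist p d u0 f"
  have meas: "\<And>u. u \<in> U \<Longrightarrow> u \<in> borel_measurable (cube_measure d)" using UL by (simp add: Lp_space_def)
  have AL: "A u \<in> Lp_space p d" if "u \<in> U" for u using A that by (simp add: Alg_def)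
  have good: "ennreal D \<le> d0 + lp_dist p d (v k) (A (v k))" if k: "k \<in> Kset - Sm" for k
  proof -
    have "\<forall>x\<in>X. v k x = u0 x" using k agree Xc by (auto simp: Sm_def)
    then have Avk: "A (v k) = f" using XA vU k by (simp add: f_def)
    have "ennreal D \<le> lp_dist p d u0 (v k)" using Dk k by simp
    also have "\<dots> \<le> lp_dist p d u0 f + lp_dist p d f (v k)"
      by (rule lp_dist_tri[OF p]) (use meas u0 vU k AL[OF u0] in \<open>auto simp: f_def Lp_space_def\<close>)
    finally show ?thesis using Avk by (simp add: d0_def lp_dist_sym[of p d f])
  qed
  have cc: "card Kset = card (Kset - Sm) + card Sm"
    using card_Diff_subset[OF finSm SmK] card_mono[OF finK SmK] by simp
  have "of_nat (card Kset) * ennreal D = of_nat (card (Kset - Sm)) * ennreal D + of_nat (card Sm) * ennreal D"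
    by (simp only: cc of_nat_add distrib_right)
  also have "of_nat (card (Kset - Sm)) * ennreal D = (\<Sum>k\<in>Kset - Sm. ennreal D)" by simp
  also have "\<dots> \<le> (\<Sum>k\<in>Kset - Sm. d0 + lp_dist p d (v k) (A (v k)))" by (rule sum_mono) (rule good)
  also have "\<dots> = of_nat (card (Kset - Sm)) * d0 + (\<Sum>k\<in>Kset - Sm. lp_dist p d (v k) (A (v k)))"
    by (simp add: sum.distrib)
  finally have step1: "of_nat (card Kset) * ennreal D \<le> of_nat (card (Kset - Sm)) * d0
      + (\<Sum>k\<in>Kset - Sm. lp_dist p d (v k) (A (v k))) + of_nat (card Sm) * ennreal D"
    by (simp add: add_right_mono)
  have s1: "of_nat (card (Kset - Sm)) * d0 \<le> of_nat (card Kset) * d0"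
    using finK by (intro mult_right_mono) (auto intro: card_mono)
  have s2: "(\<Sum>k\<in>Kset - Sm. lp_dist p d (v k) (A (v k))) \<le> (\<Sum>k\<in>Kset. lp_dist p d (v k) (A (v k)))"
    using finK by (intro sum_mono2) auto
  have s3: "of_nat (card Sm) * ennreal D \<le> ennreal D * of_nat n"
    using cSm by (simp add: mult.commute mult_left_mono)
  have "of_nat (card (Kset - Sm)) * d0 + (\<Sum>k\<in>Kset - Sm. lp_dist p d (v k) (A (v k))) + of_nat (card Sm) * ennreal D
     \<le> of_nat (card Kset) * d0 + (\<Sum>k\<in>Kset. lp_dist p d (v k) (A (v k))) + ennreal D * of_nat n"
    by (intro add_mono s1 s2 s3)
  with step1 show ?thesis by (simp add: d0_def f_def)
qed

lemma mc_bound: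
  fixes Kset :: "'k set" and v :: "'k \<Rightarrow> (nat \<Rightarrow> real) \<Rightarrow> real" and D :: real
    and P :: "'w measure"
  assumes p: "1 \<le> p" and finK: "finite Kset" and Kpos: "card Kset > 0" and Km: "2 * m \<le> card Kset"
    and UL: "\<forall>u\<in>U. u \<in> Lp_space p d" and u0: "u0 \<in> U" and vU: "\<forall>k\<in>Kset. v k \<in> U"
    and agree: "\<forall>k\<in>Kset. \<forall>x\<in>cube d. x \<notin> supp k \<longrightarrow> v k x = u0 x"
    and disj: "\<forall>k\<in>Kset. \<forall>k'\<in>Kset. k \<noteq> k' \<longrightarrow> supp k \<inter> supp k' = {}"
    and Dk: "\<forall>k\<in>Kset. ennreal D \<le> lp_dist p d u0 (v k)" and D0: "0 \<le> D"
    and PAm: "(P, A, mm) \<in> Alg_MC m U p d"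
  shows "ennreal (D / 4) \<le> mc_worst_error P A U p d"
proof -
  have PS: "prob_space P" and mmM: "mm \<in> measurable P (count_space UNIV)"
    and Emm: "(\<integral>\<^sup>+ \<omega>. ennreal (real (mm \<omega>)) \<partial>P) \<le> ennreal (real m)"
    and hyp: "\<forall>u\<in>U. \<forall>S. Lp_open p d S \<longrightarrow> {\<omega>\<in>space P. A \<omega> u \<in> S} \<in> sets P"
    and algs: "\<forall>\<omega>\<in>space P. A \<omega> \<in> Alg (mm \<omega>) U p d"
    using PAm by (auto simp: Alg_MC_def)
  interpret P: prob_space P by (rule PS)
  define K where "K = card Kset"
  define S where "S = mc_worst_error P A U p d"
  define e where "e u = (\<integral>\<^sup>+ \<omega>. lp_dist p d u (A \<omega> u) \<partial>P)" for u
  have eS: "e u \<le> S" if "u \<in> U" for u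
    unfolding S_def e_def mc_worst_error_def using that by (rule SUP_upper)
  have measd[measurable]: "(\<lambda>\<omega>. lp_dist p d u (A \<omega> u)) \<in> borel_measurable P" if "u \<in> U" for u
  proof (rule meas_dist[OF p])
    show "u \<in> Lp_space p d" using UL that by blast
    show "\<forall>S. Lp_open p d S \<longrightarrow> {\<omega> \<in> space P. A \<omega> u \<in> S} \<in> sets P" using hyp that by blast
    show "\<forall>\<omega>\<in>space P. A \<omega> u \<in> Lp_space p d" using algs that by (auto simp: Alg_def)
  qed
  have measm: "(\<lambda>\<omega>. ennreal (real (mm \<omega>))) \<in> borel_measurable P"
    by (rule measurable_compose[OF mmM]) simp
  have pw: "of_nat K * ennreal D \<le> of_nat K * lp_dist p d u0 (A \<omega> u0)
       + (\<Sum>k\<in>Kset. lp_dist p d (v k) (A \<omega> (v k))) + ennreal D * ennreal (real (mm \<omega>))"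
    if "\<omega> \<in> space P" for \<omega>
    using pointwise_bound[OF p finK UL u0 vU agree disj Dk, of "A \<omega>" "mm \<omega>"] algs that
    by (simp add: K_def ennreal_of_nat_eq_real_of_nat)
  have "of_nat K * ennreal D = (\<integral>\<^sup>+ \<omega>. of_nat K * ennreal D \<partial>P)"
    by (simp add: P.emeasure_space_1)
  also have "\<dots> \<le> (\<integral>\<^sup>+ \<omega>. of_nat K * lp_dist p d u0 (A \<omega> u0)
       + (\<Sum>k\<in>Kset. lp_dist p d (v k) (A \<omega> (v k))) + ennreal D * ennreal (real (mm \<omega>)) \<partial>P)"
    by (rule nn_integral_mono) (rule pw)
  also have "\<dots> = of_nat K * e u0 + (\<Sum>k\<in>Kset. e (v k)) + ennreal D * (\<integral>\<^sup>+ \<omega>. ennreal (real (mm \<omega>)) \<partial>P)"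
    using u0 vU measm unfolding e_def
    by (simp add: nn_integral_add nn_integral_cmult nn_integral_sum measd)
  also have "\<dots> \<le> of_nat K * S + of_nat K * S + ennreal D * ennreal (real m)"
  proof (intro add_mono mult_left_mono)
    show "e u0 \<le> S" using eS u0 by blast
    have "(\<Sum>k\<in>Kset. e (v k)) \<le> (\<Sum>k\<in>Kset. S)" using eS vU by (intro sum_mono) blast
    then show "(\<Sum>k\<in>Kset. e (v k)) \<le> of_nat K * S" by (simp add: K_def)
    show "(\<integral>\<^sup>+ \<omega>. ennreal (real (mm \<omega>)) \<partial>P) \<le> ennreal (real m)" by (rule Emm)
  qed auto
  finally have main: "of_nat K * ennreal D \<le> of_nat K * S + of_nat K * S + ennreal D * ennreal (real m)" .
  show ?thesis
  proof (cases "S = \<top>")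
    case True then show ?thesis by (simp add: S_def)
  next
    case False
    then obtain s where s: "S = ennreal s" "0 \<le> s" by (cases S) auto
    have "ennreal (real K * D) \<le> ennreal (real K * s + real K * s + D * real m)"
    proof -
      have e1: "ennreal (real K * D) = of_nat K * ennreal D"
        using D0 by (simp add: ennreal_mult ennreal_of_nat_eq_real_of_nat)
      have e2: "ennreal (real K * s + real K * s + D * real m) = of_nat K * S + of_nat K * S + ennreal D * ennreal (real m)"
      proof -
        have n1: "0 \<le> real K * s" "0 \<le> D * real m" "0 \<le> real K * s + real K * s" using s D0 by auto
        have a1: "ennreal (real K * s) = of_nat K * S" using s by (simp add: ennreal_mult ennreal_of_nat_eq_real_of_nat)
        have a2: "ennreal (D * real m) = ennreal D * ennreal (real m)" using D0 by (simp add: ennreal_mult)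
        show ?thesis
          unfolding ennreal_plus[OF n1(3) n1(2)] ennreal_plus[OF n1(1) n1(1)] a1 a2 ..
      qed
      show ?thesis unfolding e1 e2 by (rule main)
    qed
    then have r: "real K * D \<le> real K * s + real K * s + D * real m"
      by (rule ennreal_le_iff[THEN iffD1, rotated]) (use s D0 in auto)
    have "D * real m \<le> D * (real K / 2)" using Km D0 by (intro mult_left_mono) (auto simp: K_def)
    with r have "real K * D \<le> 2 * real K * s + real K * D / 2" by (simp add: algebra_simps)
    then have "real K * (D / 4) \<le> real K * s" by simp
    then have "D / 4 \<le> s" using Kpos by (simp add: K_def)
    then show ?thesis using s by (simp add: S_def ennreal_leI)
  qed
qed

lemma sum_mod_div:
  fixes a b :: nat
  assumes "0 < a"
  shows "(\<Sum>k<a*b. F (k mod a) (k div a)) = (\<Sum>i<b. \<Sum>j<a. F j i)"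
proof -
  have "(\<Sum>k<b*a. F (k mod a) (k div a)) = (\<Sum>i<b. \<Sum>k\<in>{i*a..<i*a+a}. F (k mod a) (k div a))"
    by (rule sum.nat_group[symmetric])
  also have "\<dots> = (\<Sum>i<b. \<Sum>j<a. F j i)"
  proof (rule sum.cong[OF refl])
    fix i
    have "(\<Sum>k\<in>{0+i*a..<a+i*a}. F (k mod a) (k div a)) = (\<Sum>j\<in>{0..<a}. F ((j + i*a) mod a) ((j + i*a) div a))"
      by (rule sum.shift_bounds_nat_ivl)
    also have "\<dots> = (\<Sum>j\<in>{0..<a}. F j i)"
      using assms by (intro sum.cong) auto
    finally show "(\<Sum>k\<in>{i*a..<i*a+a}. F (k mod a) (k div a)) = (\<Sum>j<a. F j i)"
      by (simp add: add.commute atLeast0LessThan)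
  qed
  finally show ?thesis by (simp add: mult.commute)
qed

lemma relu_pos: "0 \<le> x \<Longrightarrow> relu x = x" by (simp add: relu_def)
lemma relu_nonneg: "0 \<le> relu x" by (simp add: relu_def)
lemma relu_abs: "relu a + relu (- a) = \<bar>a\<bar>" by (simp add: relu_def)
lemma relu_scale: "0 \<le> k \<Longrightarrow> relu (k * a) = k * relu a"
  by (simp add: relu_def max_mult_distrib_left)

definition zb :: "nat \<Rightarrow> real" where "zb = (\<lambda>_. 0)"

definition L3W :: "nat \<Rightarrow> real \<Rightarrow> nat \<Rightarrow> nat \<Rightarrow> real" where
  "L3W R mu r k = (if r < R \<and> k < R then mu else 0)"
definition L4W :: "nat \<Rightarrow> real \<Rightarrow> nat \<Rightarrow> nat \<Rightarrow> real" where
  "L4W R la r k = (if k < R then la else 0)"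

lemma sum_lt_R:
  fixes R B :: nat
  assumes "R \<le> B"
  shows "(\<Sum>k<B. (if k < R then f k else 0)) = (\<Sum>k<R. f k)"
proof -
  have "(\<Sum>k<B. (if k < R then f k else 0)) = (\<Sum>k<R. (if k < R then f k else 0))"
    using assms by (intro sum.mono_neutral_right) auto
  then show ?thesis by simp
qed

lemma realize_mid:
  assumes RB: "R \<le> B" and mu: "0 \<le> mu"
  shows "0 \<le> z \<Longrightarrow> (\<forall>r<B. y r = (if r < R then z else 0)) \<Longrightarrow>
    realize (replicate (Suc n) B @ [1]) (replicate n (L3W R mu, zb) @ [(L4W R la, zb)]) y 0
      = real R * la * (real R * mu) ^ n * z"
proof (induction n arbitrary: y z)
  case 0
  have "(\<Sum>j<B. L4W R la 0 j * y j) = (\<Sum>j<B. (if j < R then la * z else 0))"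
    using 0 by (intro sum.cong) (auto simp: L4W_def)
  also have "\<dots> = real R * la * z" using RB by (simp add: sum_lt_R)
  finally show ?case by (simp add: affine_def zb_def)
next
  case (Suc n)
  define y' where "y' = (\<lambda>i. relu (affine (L3W R mu) zb B y i))"
  have y': "\<forall>r<B. y' r = (if r < R then real R * mu * z else 0)"
  proof (intro allI impI)
    fix r assume "r < B"
    have "(\<Sum>j<B. L3W R mu r j * y j) = (\<Sum>j<B. (if j < R then (if r < R then mu * z else 0) else 0))"
      using Suc.prems by (intro sum.cong) (auto simp: L3W_def)
    also have "\<dots> = (if r < R then real R * mu * z else 0)" using RB by (simp add: sum_lt_R)
    finally show "y' r = (if r < R then real R * mu * z else 0)"
      using Suc.prems mu by (simp add: y'_def affine_def zb_def relu_def)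
  qed
  have "realize (replicate (Suc (Suc n)) B @ [1]) (replicate (Suc n) (L3W R mu, zb) @ [(L4W R la, zb)]) y 0
      = realize (replicate (Suc n) B @ [1]) (replicate n (L3W R mu, zb) @ [(L4W R la, zb)]) y' 0"
    by (simp add: y'_def)
  also have "\<dots> = real R * la * (real R * mu) ^ n * (real R * mu * z)"
    by (rule Suc.IH) (use Suc.prems mu y' in auto)
  finally show ?case by (simp add: algebra_simps)
qed

definition L1W :: "nat \<Rightarrow> nat \<Rightarrow> real \<Rightarrow> nat \<Rightarrow> nat \<Rightarrow> real" where
  "L1W s n1 w r col = (if r < n1 \<and> col = r mod s then
      (if (r div s) mod 3 = 1 then w else if (r div s) mod 3 = 2 then - w else 0) else 0)"
definition L1b :: "nat \<Rightarrow> nat \<Rightarrow> real \<Rightarrow> real \<Rightarrow> (nat \<Rightarrow> real) \<Rightarrow> nat \<Rightarrow> real" where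
  "L1b s n1 w bc a r = (if r < n1 then
      (if (r div s) mod 3 = 0 then bc else if (r div s) mod 3 = 1 then - w * a (r mod s) else w * a (r mod s)) else 0)"
definition L2W :: "nat \<Rightarrow> nat \<Rightarrow> nat \<Rightarrow> real \<Rightarrow> nat \<Rightarrow> nat \<Rightarrow> real" where
  "L2W s n1 R v r k = (if r < R \<and> k < n1 then (if (k div s) mod 3 = 0 then v else - v) else 0)"
definition net where
  "net L s n1 R w bc a v mu la = (L1W s n1 w, L1b s n1 w bc a) # (L2W s n1 R v, zb)
      # replicate (L - 3) (L3W R mu, zb) @ [(L4W R la, zb)]"

lemma realize_net:
  assumes s1: "1 \<le> s" and sd: "s \<le> d" and n1: "n1 = s * (3 * R1)" and n1B: "n1 \<le> B" and RB: "R \<le> B"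
    and L3: "3 \<le> L" and w: "0 \<le> w" and bc: "0 \<le> bc" and v: "0 \<le> v" and mu: "0 \<le> mu"
  shows "realize (d # replicate (L-1) B @ [1]) (net L s n1 R w bc a v mu la) x 0
     = real R * la * (real R * mu) ^ (L - 3) * relu (v * real R1 * (\<Sum>j<s. bc - w * \<bar>x j - a j\<bar>))"
proof -
  define hA where "hA j t = (if t = (0::nat) then bc else if t = 1 then relu (w * (x j - a j))
      else relu (- (w * (x j - a j))))" for j t
  define y1 where "y1 = (\<lambda>i. relu (affine (L1W s n1 w) (L1b s n1 w bc a) d x i))"
  have y1: "y1 r = (if r < n1 then hA (r mod s) ((r div s) mod 3) else 0)" for r
  proof (cases "r < n1")
    case True
    define co where "co = (if (r div s) mod 3 = 1 then w else if (r div s) mod 3 = 2 then - w else 0)"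
    have "r mod s < d" using s1 sd by (meson less_le_trans mod_less_divisor zero_less_one le_trans)
    have "(\<Sum>col<d. L1W s n1 w r col * x col) = (\<Sum>col<d. (if col = r mod s then co * x col else 0))"
      using True by (intro sum.cong) (auto simp: L1W_def co_def)
    also have "\<dots> = co * x (r mod s)" using \<open>r mod s < d\<close> by (simp add: sum.delta')
    finally have S: "(\<Sum>col<d. L1W s n1 w r col * x col) = co * x (r mod s)" .
    have "(r div s) mod 3 < 3" by simp
    then have "(r div s) mod 3 = 0 \<or> (r div s) mod 3 = 1 \<or> (r div s) mod 3 = 2" by linarith
    moreover have "y1 r = relu (co * x (r mod s) + L1b s n1 w bc a r)" by (simp add: y1_def affine_def S)
    ultimately show ?thesis using True bc
      by (auto simp: co_def L1b_def hA_def relu_pos algebra_simps)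
  next
    case False
    then show ?thesis by (simp add: y1_def affine_def L1W_def L1b_def relu_def)
  qed
  define Z where "Z = relu (v * real R1 * (\<Sum>j<s. bc - w * \<bar>x j - a j\<bar>))"
  have Z0: "0 \<le> Z" by (simp add: Z_def relu_nonneg)
  define G where "G j t = (if t = (0::nat) then v else - v) * hA j t" for j t
  have Gsum: "G j 0 + G j 1 + G j 2 = v * (bc - w * \<bar>x j - a j\<bar>)" for j
  proof -
    have e: "relu (w * (x j - a j)) + relu (- (w * (x j - a j))) = w * \<bar>x j - a j\<bar>"
      using relu_abs[of "w * (x j - a j)"] w by (simp add: abs_mult)
    have "G j 0 + G j 1 + G j 2 = v * bc - v * (relu (w * (x j - a j)) + relu (- (w * (x j - a j))))"
      by (simp add: G_def hA_def algebra_simps)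
    also have "\<dots> = v * bc - v * (w * \<bar>x j - a j\<bar>)" by (simp only: e)
    finally show ?thesis by (simp add: algebra_simps)
  qed
  have pre: "(\<Sum>k<B. L2W s n1 R v r k * y1 k) = (if r < R then v * real R1 * (\<Sum>j<s. bc - w * \<bar>x j - a j\<bar>) else 0)" for r
  proof (cases "r < R")
    case True
    have "(\<Sum>k<B. L2W s n1 R v r k * y1 k) = (\<Sum>k<B. (if k < n1 then G (k mod s) ((k div s) mod 3) else 0))"
      using True by (intro sum.cong) (auto simp: L2W_def y1 G_def)
    also have "\<dots> = (\<Sum>k<n1. G (k mod s) ((k div s) mod 3))" using n1B by (rule sum_lt_R)
    also have "\<dots> = (\<Sum>i<3 * R1. \<Sum>j<s. G j (i mod 3))"
      unfolding n1 using s1 by (intro sum_mod_div) simp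
    also have "\<dots> = (\<Sum>i'<R1. \<Sum>t<3. \<Sum>j<s. G j t)"
      using sum_mod_div[of 3 "\<lambda>t i'. \<Sum>j<s. G j t" R1] by simp
    also have "\<dots> = real R1 * (\<Sum>j<s. G j 0 + G j 1 + G j 2)"
      by (simp add: numeral_3_eq_3 numeral_2_eq_2 sum.distrib)
    also have "\<dots> = v * real R1 * (\<Sum>j<s. bc - w * \<bar>x j - a j\<bar>)"
    proof -
      have "(\<Sum>j<s. G j 0 + G j 1 + G j 2) = v * (\<Sum>j<s. bc - w * \<bar>x j - a j\<bar>)"
        by (simp only: Gsum sum_distrib_left)
      then show ?thesis by simp
    qed
    finally show ?thesis using True by simp
  next
    case False
    then show ?thesis by (simp add: L2W_def)
  qed
  define y2 where "y2 = (\<lambda>i. relu (affine (L2W s n1 R v) zb B y1 i))"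
  have y2: "\<forall>r<B. y2 r = (if r < R then Z else 0)"
    by (auto simp: y2_def affine_def pre zb_def Z_def relu_def)
  have arch: "replicate (L-1) B @ [1] = B # B # (replicate (L-3) B @ [1])"
  proof -
    have "L - 1 = Suc (Suc (L - 3))" using L3 by simp
    then show ?thesis by simp
  qed
  have "realize (d # replicate (L-1) B @ [1]) (net L s n1 R w bc a v mu la) x
      = realize (B # B # (replicate (L-3) B @ [1])) ((L2W s n1 R v, zb) # replicate (L - 3) (L3W R mu, zb) @ [(L4W R la, zb)]) y1"
    unfolding arch net_def by (simp add: y1_def)
  also have "\<dots> = realize (replicate (Suc (L-3)) B @ [1]) (replicate (L - 3) (L3W R mu, zb) @ [(L4W R la, zb)]) y2"
    by (simp add: y2_def)
  finally have "realize (d # replicate (L-1) B @ [1]) (net L s n1 R w bc a v mu la) x 0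
      = realize (replicate (Suc (L-3)) B @ [1]) (replicate (L - 3) (L3W R mu, zb) @ [(L4W R la, zb)]) y2 0"
    by simp
  also have "\<dots> = real R * la * (real R * mu) ^ (L - 3) * Z"
    by (rule realize_mid[OF RB mu Z0 y2])
  finally show ?thesis by (simp add: Z_def)
qed

lemma lq_bound:
  fixes I :: "'i set" and a :: "'i \<Rightarrow> real"
  assumes q: "1 \<le> q" and finI: "finite I" and SI: "S \<subseteq> I" and out: "\<forall>i\<in>I - S. a i = 0"
    and inS: "\<forall>i\<in>S. \<bar>a i\<bar> \<le> e" and cS: "card S \<le> n" and n1: "1 \<le> n" and e0: "0 \<le> e"
  shows "lq_norm q I a \<le> e * real n powr inv_exp q"
proof (cases "q = \<infinity>")
  case True
  have all: "\<forall>i\<in>I. \<bar>a i\<bar> \<le> e" using out inS e0 by (metis Diff_iff abs_zero)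
  have "lq_norm q I a \<le> e"
  proof (cases "I = {}")
    case True then show ?thesis using \<open>q = \<infinity>\<close> e0 by (simp add: lq_norm_def)
  next
    case False then show ?thesis using \<open>q = \<infinity>\<close> finI all by (simp add: lq_norm_def Max_le_iff)
  qed
  then show ?thesis using True n1 by (simp add: inv_exp_def)
next
  case False
  define r where "r = real_of_ereal q"
  have r1: "1 \<le> r" using real_of_ereal_ge1[OF q False] r_def by simp
  have finS: "finite S" using finI SI finite_subset by blast
  have "(\<Sum>i\<in>I. \<bar>a i\<bar> powr r) = (\<Sum>i\<in>S. \<bar>a i\<bar> powr r)"
    using finI SI out by (intro sum.mono_neutral_right) auto
  also have "\<dots> \<le> (\<Sum>i\<in>S. e powr r)" using inS r1 by (intro sum_mono powr_mono2) auto
  also have "\<dots> = real (card S) * e powr r" by simp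
  also have "\<dots> \<le> real n * e powr r" using cS by (intro mult_right_mono) auto
  finally have le: "(\<Sum>i\<in>I. \<bar>a i\<bar> powr r) \<le> real n * e powr r" .
  have "(\<Sum>i\<in>I. \<bar>a i\<bar> powr r) powr (1 / r) \<le> (real n * e powr r) powr (1 / r)"
    using le r1 by (intro powr_mono2) (auto intro: sum_nonneg)
  also have "\<dots> = real n powr (1 / r) * e"
    using r1 e0 n1 by (simp add: powr_mult powr_powr)
  finally show ?thesis using False by (simp add: lq_norm_def inv_exp_def r_def mult.commute)
qed

lemma wgt_cancel: "1 \<le> n \<Longrightarrow> c / real n powr i * real n powr i = c"
  by simp

lemma card_le_prod: "card ({..<a} \<times> {..<b::nat}) = a * b" by (simp add: card_cartesian_product)

lemma net_in_H:
  assumes q: "1 \<le> q" and c: "0 < c" and s1: "1 \<le> s" and sd: "s \<le> d" and n1: "n1 = s * (3 * R1)" and R1: "1 \<le> R1"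
    and n1B: "n1 \<le> B" and R: "1 \<le> R" and RB: "R \<le> B" and L3: "3 \<le> L"
    and wd: "w = c / real n1 powr inv_exp q" and bc: "0 \<le> bc" "bc \<le> w"
    and a: "\<forall>j<s. 0 \<le> a j \<and> a j \<le> 1"
    and vd: "v = c / real (R * n1) powr inv_exp q" and mud: "mu = c / real (R * R) powr inv_exp q"
    and lad: "la = c / real R powr inv_exp q"
  shows "(\<lambda>x. realize (d # replicate (L - 1) B @ [1]) (net L s n1 R w bc a v mu la) x 0)
           \<in> Hclass q (d # replicate (L - 1) B @ [1]) c"
proof -
  let ?arch = "d # replicate (L - 1) B @ [1]"
  let ?\<Phi> = "net L s n1 R w bc a v mu la"
  let ?i = "inv_exp q"
  have n1pos: "1 \<le> n1" using n1 s1 R1 by simp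
  have w0: "0 \<le> w" using wd c by simp
  have len: "length ?\<Phi> + 1 = length ?arch" using L3 by (simp add: net_def)
  have lenP: "length ?\<Phi> = L" using L3 by (simp add: net_def)
  have zbn: "lq_norm q {..<k} zb \<le> c" for k
    using lq_bound[OF q, of "{..<k}" "{}" zb 0 1] c by (simp add: zb_def)
  have b1: "lq_norm q ({..<B} \<times> {..<d}) (\<lambda>(i,j). L1W s n1 w i j) \<le> c"
  proof -
    have "lq_norm q ({..<B} \<times> {..<d}) (\<lambda>(i,j). L1W s n1 w i j) \<le> w * real n1 powr ?i"
    proof (rule lq_bound[OF q, where S = "(\<lambda>r. (r, r mod s)) ` {..<n1}"])
      show "(\<lambda>r. (r, r mod s)) ` {..<n1} \<subseteq> {..<B} \<times> {..<d}"
      proof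
        fix z assume "z \<in> (\<lambda>r. (r, r mod s)) ` {..<n1}"
        then obtain r where "r < n1" "z = (r, r mod s)" by auto
        moreover have "r mod s < d" using s1 sd by (meson less_le_trans mod_less_divisor zero_less_one le_trans)
        ultimately show "z \<in> {..<B} \<times> {..<d}" using n1B by auto
      qed
      show "\<forall>i\<in>{..<B} \<times> {..<d} - (\<lambda>r. (r, r mod s)) ` {..<n1}. (case i of (i, j) \<Rightarrow> L1W s n1 w i j) = 0"
        by (auto simp: L1W_def)
      show "\<forall>i\<in>(\<lambda>r. (r, r mod s)) ` {..<n1}. \<bar>case i of (i, j) \<Rightarrow> L1W s n1 w i j\<bar> \<le> w"
        using w0 by (auto simp: L1W_def)
      show "card ((\<lambda>r. (r, r mod s)) ` {..<n1}) \<le> n1"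
        using card_image_le[of "{..<n1}" "\<lambda>r. (r, r mod s)"] by simp
    qed (use n1pos w0 in auto)
    also have "\<dots> = c" using wd n1pos by simp
    finally show ?thesis .
  qed
  have b1b: "lq_norm q {..<B} (L1b s n1 w bc a) \<le> c"
  proof -
    have "lq_norm q {..<B} (L1b s n1 w bc a) \<le> w * real n1 powr ?i"
    proof (rule lq_bound[OF q, where S = "{..<n1}"])
      show "\<forall>i\<in>{..<n1}. \<bar>L1b s n1 w bc a i\<bar> \<le> w"
      proof
        fix i assume "i \<in> {..<n1}"
        have "i mod s < s" using s1 by simp
        then have "0 \<le> a (i mod s)" "a (i mod s) \<le> 1" using a by auto
        then have "\<bar>w * a (i mod s)\<bar> \<le> w" using w0 by (simp add: abs_mult mult_left_le)
        then show "\<bar>L1b s n1 w bc a i\<bar> \<le> w" using bc by (auto simp: L1b_def abs_mult)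
      qed
    qed (use n1B n1pos w0 in \<open>auto simp: L1b_def\<close>)
    also have "\<dots> = c" using wd n1pos by simp
    finally show ?thesis .
  qed
  have b2: "lq_norm q ({..<B} \<times> {..<B}) (\<lambda>(i,j). L2W s n1 R v i j) \<le> c"
  proof -
    have "lq_norm q ({..<B} \<times> {..<B}) (\<lambda>(i,j). L2W s n1 R v i j) \<le> v * real (R * n1) powr ?i"
    proof (rule lq_bound[OF q, where S = "{..<R} \<times> {..<n1}"])
    qed (use n1B RB n1pos R vd c in \<open>auto simp: L2W_def card_cartesian_product split: if_splits\<close>)
    also have "\<dots> = c" using vd n1pos R by simp
    finally show ?thesis .
  qed
  have b3: "lq_norm q ({..<B} \<times> {..<B}) (\<lambda>(i,j). L3W R mu i j) \<le> c"
  proof -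
    have "lq_norm q ({..<B} \<times> {..<B}) (\<lambda>(i,j). L3W R mu i j) \<le> mu * real (R * R) powr ?i"
    proof (rule lq_bound[OF q, where S = "{..<R} \<times> {..<R}"])
    qed (use RB R mud c in \<open>auto simp: L3W_def card_cartesian_product split: if_splits\<close>)
    also have "\<dots> = c" using mud R by simp
    finally show ?thesis .
  qed
  have b4: "lq_norm q ({..<1} \<times> {..<B}) (\<lambda>(i,j). L4W R la i j) \<le> c"
  proof -
    have "lq_norm q ({..<1} \<times> {..<B}) (\<lambda>(i,j). L4W R la i j) \<le> la * real R powr ?i"
    proof (rule lq_bound[OF q, where S = "{..<1} \<times> {..<R}"])
    qed (use RB R lad c in \<open>auto simp: L4W_def card_cartesian_product split: if_splits\<close>)
    also have "\<dots> = c" using lad R by simp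
    finally show ?thesis .
  qed
  have layer: "max (lq_norm q ({..<?arch ! Suc k} \<times> {..<?arch ! k}) (\<lambda>(i, j). fst (?\<Phi> ! k) i j))
                   (lq_norm q {..<?arch ! Suc k} (snd (?\<Phi> ! k))) \<le> c" if k: "k < L" for k
  proof -
    consider "k = 0" | "k = 1" | "2 \<le> k \<and> k < L - 1" | "k = L - 1" using k L3 by linarith
    then show ?thesis
    proof cases
      case 1
      have "?arch ! Suc 0 = B" using L3 by (simp add: nth_append)
      then show ?thesis using 1 b1 b1b by (simp add: net_def)
    next
      case 2
      have "?arch ! Suc 1 = B" "?arch ! 1 = B" using L3 by (auto simp: nth_append)
      then show ?thesis using 2 b2 zbn by (simp add: net_def)
    next
      case 3
      have "?arch ! Suc k = B" "?arch ! k = B" using 3 by (auto simp: nth_append nth_Cons')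
      moreover have "?\<Phi> ! k = (L3W R mu, zb)" using 3 by (auto simp: net_def nth_append nth_Cons')
      ultimately show ?thesis using b3 zbn by simp
    next
      case 4
      have "?arch ! Suc k = 1" "?arch ! k = B" using 4 L3 by (auto simp: nth_append nth_Cons')
      moreover have "?\<Phi> ! k = (L4W R la, zb)" using 4 L3 by (auto simp: net_def nth_append nth_Cons')
      ultimately show ?thesis using b4 zbn by simp
    qed
  qed
  have "coeff_norm q ?arch ?\<Phi> \<le> c"
    unfolding coeff_norm_def lenP using layer c by (subst Max_le_iff) auto
  then show ?thesis using len unfolding Hclass_def by blast
qed

definition ctr :: "nat \<Rightarrow> (nat \<Rightarrow> nat) \<Rightarrow> nat \<Rightarrow> real" where
  "ctr N k j = (real (k j) + 1/2) / real N"
definition bump :: "real \<Rightarrow> nat \<Rightarrow> nat \<Rightarrow> (nat \<Rightarrow> nat) \<Rightarrow> (nat \<Rightarrow> real) \<Rightarrow> real" where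
  "bump sc N s k x = sc * relu (1 / (2 * real N) - (\<Sum>j<s. \<bar>x j - ctr N k j\<bar>))"
definition bsupp :: "nat \<Rightarrow> nat \<Rightarrow> (nat \<Rightarrow> nat) \<Rightarrow> (nat \<Rightarrow> real) set" where
  "bsupp N s k = {x. \<forall>j<s. \<bar>x j - ctr N k j\<bar> < 1 / (2 * real N)}"
definition Ebox :: "nat \<Rightarrow> nat \<Rightarrow> nat \<Rightarrow> (nat \<Rightarrow> nat) \<Rightarrow> (nat \<Rightarrow> real) set" where
  "Ebox d N s k = PiE {..<d} (\<lambda>j. if j < s then {ctr N k j - 1 / (4 * real N * real s) .. ctr N k j + 1 / (4 * real N * real s)} else {0..1})"
definition grid :: "nat \<Rightarrow> nat \<Rightarrow> (nat \<Rightarrow> nat) set" where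
  "grid s N = PiE {..<s} (\<lambda>_. {..<N})"

lemma bump_out: "x \<notin> bsupp N s k \<Longrightarrow> bump sc N s k x = 0"
proof -
  assume "x \<notin> bsupp N s k"
  then obtain j where j: "j < s" "\<bar>x j - ctr N k j\<bar> \<ge> 1 / (2 * real N)" by (auto simp: bsupp_def not_less)
  have "\<bar>x j - ctr N k j\<bar> \<le> (\<Sum>j<s. \<bar>x j - ctr N k j\<bar>)"
    using j(1) by (intro member_le_sum) auto
  then have "1 / (2 * real N) - (\<Sum>j<s. \<bar>x j - ctr N k j\<bar>) \<le> 0" using j(2) by linarith
  then show ?thesis by (simp add: bump_def relu_def)
qed

lemma bsupp_disj:
  assumes N: "1 \<le> N" and k: "k \<in> grid s N" and k': "k' \<in> grid s N"
    and x: "x \<in> bsupp N s k" "x \<in> bsupp N s k'"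
  shows "k = k'"
proof (rule ext)
  fix j
  show "k j = k' j"
  proof (cases "j < s")
    case True
    have a: "\<bar>x j - ctr N k j\<bar> < 1 / (2 * real N)" "\<bar>x j - ctr N k' j\<bar> < 1 / (2 * real N)"
      using x True by (auto simp: bsupp_def)
    have "\<bar>ctr N k j - ctr N k' j\<bar> < 1 / real N" using a by (simp add: abs_diff_less_iff) 
    then have "\<bar>real (k j) - real (k' j)\<bar> / real N < 1 / real N"
      by (simp add: ctr_def diff_divide_distrib[symmetric])
    then have "\<bar>real (k j) - real (k' j)\<bar> < 1" using N by (simp add: divide_less_cancel)
    then show ?thesis by linarith
  next
    case False
    then show ?thesis using k k' by (simp add: grid_def PiE_def extensional_def)
  qed
qed

lemma bump_Ebox:
  assumes N: "1 \<le> N" and s: "1 \<le> s" and sc: "0 \<le> sc" and x: "x \<in> Ebox d N s k" and sd: "s \<le> d"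
  shows "sc / (4 * real N) \<le> bump sc N s k x"
proof -
  have "\<forall>j<s. \<bar>x j - ctr N k j\<bar> \<le> 1 / (4 * real N * real s)"
  proof (intro allI impI)
    fix j assume j: "j < s"
    then have "j \<in> {..<d}" using sd by simp
    from PiE_mem[OF x[unfolded Ebox_def] this] j
    show "\<bar>x j - ctr N k j\<bar> \<le> 1 / (4 * real N * real s)" by (simp add: abs_le_iff)
  qed
  then have "(\<Sum>j<s. \<bar>x j - ctr N k j\<bar>) \<le> (\<Sum>j<s. 1 / (4 * real N * real s))"
    by (intro sum_mono) auto
  also have "\<dots> = 1 / (4 * real N)" using s by simp
  finally have le: "(\<Sum>j<s. \<bar>x j - ctr N k j\<bar>) \<le> 1 / (4 * real N)" .
  have "1 / (4 * real N) \<le> relu (1 / (2 * real N) - (\<Sum>j<s. \<bar>x j - ctr N k j\<bar>))"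
    using le N unfolding relu_def by (simp add: field_simps)
  then have "sc * (1 / (4 * real N)) \<le> bump sc N s k x"
    unfolding bump_def using sc by (rule mult_left_mono)
  then show ?thesis by simp
qed

lemma ctr_bounds:
  assumes N: "1 \<le> N" and s: "1 \<le> s" and k: "k \<in> grid s N" and j: "j < s"
  shows "0 \<le> ctr N k j - 1 / (4 * real N * real s)" "ctr N k j + 1 / (4 * real N * real s) \<le> 1"
    "0 \<le> ctr N k j" "ctr N k j \<le> 1"
proof -
  have kj: "k j < N" using k j by (auto simp: grid_def PiE_def)
  have kj': "real (k j) + 1 \<le> real N" using kj by linarith
  have e: "1 / (4 * real N * real s) \<le> 1 / (4 * real N)" using N s
    by (intro divide_left_mono) auto
  have Np: "0 < real N" using N by simp
  show "0 \<le> ctr N k j - 1 / (4 * real N * real s)"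
  proof -
    have "1 / (4 * real N) \<le> (real (k j) + 1/2) / real N" using Np by (simp add: field_simps)
    then show ?thesis using e by (simp add: ctr_def)
  qed
  show "ctr N k j + 1 / (4 * real N * real s) \<le> 1"
  proof -
    have "(real (k j) + 1/2) / real N + 1 / (4 * real N) \<le> 1" using Np kj' by (simp add: field_simps)
    then show ?thesis using e by (simp add: ctr_def)
  qed
  show "0 \<le> ctr N k j" by (simp add: ctr_def)
  show "ctr N k j \<le> 1" using Np kj' by (simp add: ctr_def field_simps)
qed

lemma I01_Icc:
  assumes "0 \<le> l" "l \<le> u" "u \<le> 1"
  shows "{l..u} \<in> sets I01" "emeasure I01 {l..u} = ennreal (u - l)"
proof -
  show "{l..u} \<in> sets I01" using assms by (subst sets_restrict_space_iff) auto
  have "emeasure I01 {l..u} = emeasure lborel {l..u}" using assms by (intro emeasure_restrict_space) auto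
  then show "emeasure I01 {l..u} = ennreal (u - l)" using assms by simp
qed

lemma Ebox_props:
  assumes N: "1 \<le> N" and s: "1 \<le> s" and sd: "s \<le> d" and k: "k \<in> grid s N"
  shows "Ebox d N s k \<subseteq> cube d" "Ebox d N s k \<in> sets (cube_measure d)"
    "measure (cube_measure d) (Ebox d N s k) = (1 / (2 * real N * real s)) ^ s"
proof -
  define A where "A j = (if j < s then {ctr N k j - 1 / (4 * real N * real s) .. ctr N k j + 1 / (4 * real N * real s)} else {0..1::real})" for j
  have E: "Ebox d N s k = PiE {..<d} A" unfolding Ebox_def by (rule PiE_cong) (simp add: A_def)
  have Asub: "A j \<subseteq> {0..1}" for j
    using ctr_bounds[OF N s k] by (auto simp: A_def)
  show "Ebox d N s k \<subseteq> cube d" unfolding E cube_def using Asub by (intro PiE_mono) auto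
  have Asets: "A j \<in> sets I01" for j
    using ctr_bounds[OF N s k] I01_Icc(1) by (auto simp: A_def)
  show "Ebox d N s k \<in> sets (cube_measure d)"
    unfolding E cube_measure_def by (rule sets_PiM_I_finite) (auto simp: Asets)
  have Am: "emeasure I01 (A j) = (if j < s then ennreal (1 / (2 * real N * real s)) else 1)" for j
  proof (cases "j < s")
    case True
    have "emeasure I01 (A j) = ennreal ((ctr N k j + 1 / (4 * real N * real s)) - (ctr N k j - 1 / (4 * real N * real s)))"
      using True ctr_bounds[OF N s k True] by (simp add: A_def I01_Icc(2))
    also have "(ctr N k j + 1 / (4 * real N * real s)) - (ctr N k j - 1 / (4 * real N * real s)) = 1 / (2 * real N * real s)"
      by simp
    finally show ?thesis using True by simp
  next
    case False then show ?thesis by (simp add: A_def I01_Icc(2)[of 0 1, simplified])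
  qed
  have "emeasure (cube_measure d) (Ebox d N s k) = (\<Prod>j<d. emeasure I01 (A j))"
    unfolding E cube_measure_def
    by (rule product_sigma_finite.emeasure_PiM[OF psf_I01]) (auto simp: Asets)
  also have "\<dots> = (\<Prod>j<d. (if j < s then ennreal (1 / (2 * real N * real s)) else 1))" by (simp add: Am)
  also have "\<dots> = (\<Prod>j<s. ennreal (1 / (2 * real N * real s)))"
  proof -
    have "(\<Prod>j<d. (if j < s then ennreal (1 / (2 * real N * real s)) else 1)) = (\<Prod>j<s. (if j < s then ennreal (1 / (2 * real N * real s)) else 1))"
      using sd by (intro prod.mono_neutral_right) auto
    then show ?thesis by simp
  qed
  also have "\<dots> = ennreal ((1 / (2 * real N * real s)) ^ s)" by (simp add: ennreal_power)
  finally have "emeasure (cube_measure d) (Ebox d N s k) = ennreal ((1 / (2 * real N * real s)) ^ s)" .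
  then show "measure (cube_measure d) (Ebox d N s k) = (1 / (2 * real N * real s)) ^ s"
    by (simp add: measure_def)
qed

lemma N_choice:
  fixes m s :: nat
  assumes m: "1 \<le> m" and s: "1 \<le> s"
  defines "N \<equiv> nat \<lceil>(2 * real m) powr (1 / real s)\<rceil>"
  shows "1 \<le> N" "2 * m \<le> N ^ s" "real N \<le> 4 * real m powr (1 / real s)"
proof -
  define x where "x = (2 * real m) powr (1 / real s)"
  have x1: "1 \<le> x" unfolding x_def using m s by (intro ge_one_powr_ge_zero) auto
  have Nx: "real N = real_of_int \<lceil>x\<rceil>" using x1 by (simp add: N_def x_def)
  show "1 \<le> N" using x1 Nx by linarith
  have "x \<le> real N" using Nx by linarith
  then have "x ^ s \<le> real N ^ s" using x1 by (intro power_mono) auto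
  moreover have "x ^ s = 2 * real m" unfolding x_def using m s
    by (simp add: powr_realpow[symmetric] powr_powr)
  ultimately have "real (2 * m) \<le> real (N ^ s)" by simp
  then show "2 * m \<le> N ^ s" by linarith
  have "real N \<le> x + 1" using Nx by linarith
  also have "\<dots> \<le> 2 * x" using x1 by simp
  also have "x = 2 powr (1 / real s) * real m powr (1 / real s)" unfolding x_def by (simp add: powr_mult)
  also have "2 powr (1 / real s) \<le> 2 powr 1" using s by (intro powr_mono) auto
  finally show "real N \<le> 4 * real m powr (1 / real s)"
    by (simp add: mult_right_mono)
qed

lemma final_ineq:
  fixes c0 Om sc ip :: real and N m s :: nat
  assumes c0: "0 < c0" and Om: "0 \<le> Om" and scb: "Om / real s \<le> sc" and s: "1 \<le> s" and N: "1 \<le> N"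
    and Nm: "real N \<le> 4 * real m powr (1 / real s)" and m: "1 \<le> m" and ip: "0 \<le> ip"
  shows "c0 * Om / (64 * real s) powr (1 + real s * ip) * real m powr (- ip - 1 / real s)
     \<le> c0 * (sc / (4 * real N)) * ((1 / (2 * real N * real s)) ^ s) powr ip / 4"
proof -
  define y where "y = 2 * real N * real s"
  have y0: "0 < y" using N s by (simp add: y_def)
  define M where "M = real m powr (1 / real s)"
  have M0: "0 < M" using m by (simp add: M_def)
  have Mp: "M powr (real s * ip) = real m powr ip" using s by (simp add: M_def powr_powr)
  have e1: "((1 / y) ^ s) powr ip = 1 / y powr (real s * ip)"
    using y0 by (simp add: power_one_over powr_realpow[symmetric] powr_powr powr_divide)
  have "y \<le> 8 * real s * M" using Nm s by (simp add: y_def M_def)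
  then have "y powr (real s * ip) \<le> (8 * real s * M) powr (real s * ip)"
    using y0 ip by (intro powr_mono2) auto
  also have "\<dots> = (8 * real s) powr (real s * ip) * real m powr ip"
    using s M0 by (simp add: powr_mult Mp)
  also have "\<dots> \<le> (64 * real s) powr (real s * ip) * real m powr ip"
    using s ip by (intro mult_right_mono powr_mono2) auto
  finally have yb: "y powr (real s * ip) \<le> (64 * real s) powr (real s * ip) * real m powr ip" .
  define Q where "Q = (64 * real s) powr (real s * ip) * real m powr ip"
  have Q0: "0 < Q" using s m by (simp add: Q_def)
  have sc0: "0 \<le> sc" using scb Om s by (meson divide_nonneg_nonneg of_nat_0_le_iff order_trans)
  have "c0 * (Om / real s) / (64 * M * Q) \<le> c0 * sc / (16 * real N * Q)"
  proof -
    have "c0 * (Om / real s) \<le> c0 * sc"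
      by (rule mult_left_mono[OF scb]) (use c0 in simp)
    moreover have "16 * real N * Q \<le> 64 * M * Q" using Nm Q0 by (simp add: M_def)
    ultimately show ?thesis using c0 N Q0 M0 sc0
      by (intro frac_le) auto
  qed
  also have "\<dots> \<le> c0 * sc / (16 * real N * y powr (real s * ip))"
    using yb c0 sc0 N y0 m s by (intro divide_left_mono) (auto simp: Q_def)
  also have "\<dots> = c0 * (sc / (4 * real N)) * ((1 / (2 * real N * real s)) ^ s) powr ip / 4"
    using e1 by (simp add: y_def[symmetric])
  finally have main: "c0 * (Om / real s) / (64 * M * Q)
     \<le> c0 * (sc / (4 * real N)) * ((1 / (2 * real N * real s)) ^ s) powr ip / 4" .
  have "c0 * Om / (64 * real s) powr (1 + real s * ip) * real m powr (- ip - 1 / real s)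
      = c0 * (Om / real s) / (64 * M * Q)"
  proof -
    have pm: "real m powr (- ip - 1 / real s) = 1 / (real m powr ip * M)"
    proof -
      have "real m powr (- ip - 1 / real s) = real m powr (- (ip + 1 / real s))" by simp
      also have "\<dots> = 1 / real m powr (ip + 1 / real s)" by (rule powr_minus_divide)
      also have "\<dots> = 1 / (real m powr ip * M)" by (simp add: M_def powr_add)
      finally show ?thesis .
    qed
    have p64: "(64 * real s) powr (1 + real s * ip) = 64 * real s * (64 * real s) powr (real s * ip)"
      using s by (simp add: powr_add)
    show ?thesis unfolding pm p64 Q_def using s m M0 by (simp add: field_simps)
  qed
  with main show ?thesis by simp
qed

lemma inv_exp_range: "1 \<le> q \<Longrightarrow> 0 \<le> inv_exp q \<and> inv_exp q \<le> 1"
  by (cases q) (auto simp: inv_exp_def)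

lemma inv_exp_ge2: "2 \<le> q \<Longrightarrow> inv_exp q \<le> 1/2"
  by (cases q) (auto simp: inv_exp_def field_simps)

lemma scale_q_le2:
  fixes c i :: real and s L :: nat
  assumes c: "0 < c" and s: "1 \<le> s" and L: "3 \<le> L"
  defines "w \<equiv> c / real (s * (3 * 1)) powr i"
  shows "(1 / (4 * 3 powr (2 * i))) * c ^ L * real s powr (1 - 2 * i) / real s
     \<le> real 1 * (c / real 1 powr i) * (real 1 * (c / real (1 * 1) powr i)) ^ (L - 3)
        * ((c / real (1 * (s * (3 * 1))) powr i) * real 1 * w)"
proof -
  define X where "X = (real s * 3) powr i"
  have X0: "0 < X" using s by (simp add: X_def)
  have cL: "c ^ L = c * c ^ (L - 3) * c * c"
  proof -
    have "L = (L - 3) + 3" using L by simp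
    then have "c ^ L = c ^ (L - 3) * c ^ 3" by (metis power_add)
    then show ?thesis by (simp add: power3_eq_cube algebra_simps)
  qed
  have rhs: "real 1 * (c / real 1 powr i) * (real 1 * (c / real (1 * 1) powr i)) ^ (L - 3)
        * ((c / real (1 * (s * (3 * 1))) powr i) * real 1 * w) = c ^ L / (X * X)"
  proof -
    have "real 1 * (c / real 1 powr i) * (real 1 * (c / real (1 * 1) powr i)) ^ (L - 3)
        * ((c / real (1 * (s * (3 * 1))) powr i) * real 1 * w) = c * c ^ (L - 3) * ((c / X) * (c / X))"
      by (simp add: w_def X_def)
    also have "\<dots> = (c * c ^ (L - 3) * c * c) / (X * X)" by simp
    finally show ?thesis by (simp only: cL)
  qed
  have XX: "X * X = real s powr (2 * i) * 3 powr (2 * i)"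
  proof -
    have "X * X = (real s * 3) powr (i + i)" unfolding X_def by (rule powr_add[symmetric])
    also have "\<dots> = (real s * 3) powr (2 * i)" by (simp only: mult_2[symmetric])
    also have "\<dots> = real s powr (2 * i) * 3 powr (2 * i)" by (rule powr_mult)
    finally show ?thesis .
  qed
  have sp: "real s powr (1 - 2 * i) = real s / real s powr (2 * i)"
    using s by (simp add: powr_diff)
  have lhs: "(1 / (4 * 3 powr (2 * i))) * c ^ L * real s powr (1 - 2 * i) / real s = c ^ L / (4 * (X * X))"
    unfolding XX sp using s by simp
  have "c ^ L / (4 * (X * X)) \<le> c ^ L / (X * X)" using c X0 by (intro divide_left_mono) auto
  then show ?thesis unfolding rhs lhs .
qed

lemma R1_facts:
  fixes B s :: nat
  assumes s: "1 \<le> s" and B: "3 * s \<le> B"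
  shows "1 \<le> B div (3 * s)" "B \<le> 6 * s * (B div (3 * s))" "s * (3 * (B div (3 * s))) \<le> B"
proof -
  define t where "t = 3 * s"
  have p: "0 < t" using s by (simp add: t_def)
  have R1: "0 < B div t" using B p by (simp add: div_greater_zero_iff t_def)
  then show "1 \<le> B div (3 * s)" by (simp add: t_def)
  have dm: "B = t * (B div t) + B mod t" by simp
  have "B mod t < t" using p by simp
  also have "t \<le> t * (B div t)" using R1 by simp
  finally have "B < 2 * (t * (B div t))" using dm by linarith
  then show "B \<le> 6 * s * (B div (3 * s))" by (simp add: t_def)
  have "t * (B div t) \<le> B" by (simp add: mult.commute)
  moreover have "s * (3 * (B div (3 * s))) = t * (B div t)"
    unfolding t_def by (simp only: mult.assoc[symmetric] mult.commute[of s 3])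
  ultimately show "s * (3 * (B div (3 * s))) \<le> B" by simp
qed

lemma scale_q_ge2:
  fixes c i :: real and s L B :: nat
  assumes c: "0 < c" and s: "1 \<le> s" and L: "3 \<le> L" and B: "3 * s \<le> B" and i0: "0 \<le> i" and i2: "i \<le> 1/2"
  defines "R1 \<equiv> B div (3 * s)"
  defines "n1 \<equiv> s * (3 * R1)"
  defines "w \<equiv> c / real n1 powr i"
  shows "(1 / 24) * c ^ L * (real B powr (1 - 2 * i)) ^ (L - 1) / real s
     \<le> real B * (c / real B powr i) * (real B * (c / real (B * B) powr i)) ^ (L - 3)
        * ((c / real (B * n1) powr i) * real R1 * w)"
proof -
  have R1: "1 \<le> R1" and B6: "B \<le> 6 * s * R1" and n1B: "n1 \<le> B"
    using R1_facts[OF s B] by (auto simp: R1_def n1_def)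
  have Bp: "0 < real B" using B s by simp
  have n1p: "0 < real n1" using R1 s by (simp add: n1_def)
  define P where "P = real B powr i"
  define Q where "Q = real n1 powr i"
  have P0: "0 < P" and Q0: "0 < Q" using Bp n1p by (auto simp: P_def Q_def)
  define \<beta> where "\<beta> = real B / (P * P)"
  have PP: "P * P = real B powr (2 * i)"
  proof -
    have "P * P = real B powr (i + i)" unfolding P_def by (rule powr_add[symmetric])
    then show ?thesis by (simp only: mult_2[symmetric])
  qed
  have beta: "real B powr (1 - 2 * i) = \<beta>" unfolding \<beta>_def PP using Bp by (simp add: powr_diff)
  have QQ: "Q * Q = real n1 powr (2 * i)"
  proof -
    have "Q * Q = real n1 powr (i + i)" unfolding Q_def by (rule powr_add[symmetric])
    then show ?thesis by (simp only: mult_2[symmetric])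
  qed
  have e1: "real (B * B) powr i = P * P" unfolding P_def by (simp add: powr_mult)
  have e2: "real (B * n1) powr i = P * Q" unfolding P_def Q_def by (simp add: powr_mult)
  have Lm: "L - 1 = (L - 3) + 2" "L - 2 = (L - 3) + 1" using L by auto
  have cL: "c ^ L = c ^ (L - 3) * c ^ 3"
  proof -
    have "L = (L - 3) + 3" using L by simp
    then show ?thesis by (metis power_add)
  qed
  have rhs: "real B * (c / real B powr i) * (real B * (c / real (B * B) powr i)) ^ (L - 3)
        * ((c / real (B * n1) powr i) * real R1 * w) = c ^ L * \<beta> ^ (L - 3) * (\<beta> * (real R1 / (Q * Q)))"
  proof -
    have "real B * (c / real B powr i) * (real B * (c / real (B * B) powr i)) ^ (L - 3)
        * ((c / real (B * n1) powr i) * real R1 * w)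
        = real B * (c / P) * (c * \<beta>) ^ (L - 3) * ((c / (P * Q)) * real R1 * (c / Q))"
      unfolding e1 e2 w_def Q_def[symmetric] P_def[symmetric] \<beta>_def using P0 by (simp add: field_simps)
    also have "\<dots> = c ^ (L - 3) * \<beta> ^ (L - 3) * (real B * (c / P) * ((c / (P * Q)) * real R1 * (c / Q)))"
      by (simp add: power_mult_distrib)
    also have "real B * (c / P) * ((c / (P * Q)) * real R1 * (c / Q)) = c ^ 3 * (\<beta> * (real R1 / (Q * Q)))"
      using P0 Q0 by (simp add: \<beta>_def power3_eq_cube field_simps)
    finally show ?thesis by (simp add: cL)
  qed
  have lhs: "(1 / 24) * c ^ L * (real B powr (1 - 2 * i)) ^ (L - 1) / real s
      = c ^ L * \<beta> ^ (L - 3) * (\<beta> * (\<beta> / (24 * real s)))"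
    unfolding beta Lm(1) by (simp add: power_add power2_eq_square)
  have key: "\<beta> / (24 * real s) \<le> real R1 / (Q * Q)"
  proof -
    have "\<beta> = real B powr (1 - 2 * i)" by (simp add: beta)
    also have "\<dots> \<le> real (6 * s * R1) powr (1 - 2 * i)"
    proof -
      have "real B \<le> real (6 * s * R1)" using B6 by (rule of_nat_mono)
      then show ?thesis using Bp i2 by (intro powr_mono2) auto
    qed
    also have "\<dots> = (6 * real s) powr (1 - 2 * i) * real R1 powr (1 - 2 * i)" by (simp add: powr_mult)
    also have "(6 * real s) powr (1 - 2 * i) = 6 * real s / (6 * real s) powr (2 * i)"
      using s by (simp add: powr_diff)
    also have "\<dots> \<le> 6 * real s / (3 * real s) powr (2 * i)"
      using s i0 by (intro divide_left_mono powr_mono2) auto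
    also have "real R1 powr (1 - 2 * i) = real R1 / real R1 powr (2 * i)"
      using R1 by (simp add: powr_diff)
    finally have b1: "\<beta> \<le> 6 * real s / (3 * real s) powr (2 * i) * (real R1 / real R1 powr (2 * i))"
      using R1 by (simp add: mult_right_mono)
    have QQ': "Q * Q = (3 * real s) powr (2 * i) * real R1 powr (2 * i)"
      unfolding QQ n1_def by (simp add: powr_mult)
    have eq: "6 * real s / (3 * real s) powr (2 * i) * (real R1 / real R1 powr (2 * i)) = 6 * real s * (real R1 / (Q * Q))"
      unfolding QQ' by simp
    from b1 have "\<beta> \<le> 6 * real s * (real R1 / (Q * Q))" by (simp only: eq)
    then have "\<beta> / (24 * real s) \<le> 6 * real s * (real R1 / (Q * Q)) / (24 * real s)"
      using s by (intro divide_right_mono) auto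
    also have "\<dots> = (real R1 / (Q * Q)) / 4" using s by simp
    also have "\<dots> \<le> real R1 / (Q * Q)"
    proof -
      have h: "\<And>X::real. 0 \<le> X \<Longrightarrow> X / 4 \<le> X" by simp
      show ?thesis by (rule h) simp
    qed
    finally show ?thesis .
  qed
  have b0: "0 \<le> \<beta>" using Bp P0 by (simp add: \<beta>_def)
  have "c ^ L * \<beta> ^ (L - 3) * (\<beta> * (\<beta> / (24 * real s))) \<le> c ^ L * \<beta> ^ (L - 3) * (\<beta> * (real R1 / (Q * Q)))"
    using key b0 c by (intro mult_left_mono) auto
  then show ?thesis unfolding lhs rhs .
qed

lemma main_gen:
  fixes L d B s m R Rr :: nat and p q :: ereal and c c0 Om :: real
    and U :: "((nat \<Rightarrow> real) \<Rightarrow> real) set" and u0 :: "(nat \<Rightarrow> real) \<Rightarrow> real"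
  assumes L3: "L \<ge> 3" and m1: "m \<ge> 1" and p1: "1 \<le> p" and q1: "1 \<le> q" and c: "c > 0" and c0: "c0 > 0"
    and UL: "\<forall>u\<in>U. continuous_on (cube d) u \<and> u \<in> Lp_space p d" and u0: "u0 \<in> U"
    and hyp: "\<forall>h\<in>Hclass q (d # replicate (L - 1) B @ [1]) c. \<exists>v\<in>U. \<forall>x\<in>cube d. v x = u0 x + c0 * h x"
    and s1: "1 \<le> s" and sd: "s \<le> d"
    and Rr: "1 \<le> Rr" and n1B: "s * (3 * Rr) \<le> B" and R: "1 \<le> R" and RB: "R \<le> B"
    and Om0: "0 \<le> Om"
    and scb: "Om / real s \<le> real R * (c / real R powr inv_exp q) * (real R * (c / real (R * R) powr inv_exp q)) ^ (L - 3)
         * ((c / real (R * (s * (3 * Rr))) powr inv_exp q) * real Rr * (c / real (s * (3 * Rr)) powr inv_exp q))"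
  shows "ennreal (c0 * Om / (64 * real s) powr (1 + real s * inv_exp p) * real m powr (- inv_exp p - 1 / real s))
           \<le> err_MC TYPE('w) m U p d"
proof -
  define i where "i = inv_exp q"
  define ip where "ip = inv_exp p"
  define n1 where "n1 = s * (3 * Rr)"
  define w where "w = c / real n1 powr i"
  define v where "v = c / real (R * n1) powr i"
  define mu where "mu = c / real (R * R) powr i"
  define la where "la = c / real R powr i"
  define sc where "sc = real R * la * (real R * mu) ^ (L - 3) * (v * real Rr * w)"
  define N where "N = nat \<lceil>(2 * real m) powr (1 / real s)\<rceil>"
  have N1: "1 \<le> N" and Nm: "2 * m \<le> N ^ s" and Nb: "real N \<le> 4 * real m powr (1 / real s)"
    using N_choice[OF m1 s1] by (simp_all add: N_def)
  define bc where "bc = w / (2 * real N * real s)"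
  define arch where "arch = d # replicate (L - 1) B @ [1]"
  define h where "h k = (\<lambda>x. realize arch (net L s n1 R w bc (ctr N k) v mu la) x 0)" for k
  have w0: "0 \<le> w" and v0: "0 \<le> v" and mu0: "0 \<le> mu" and la0: "0 \<le> la"
    using c by (auto simp: w_def v_def mu_def la_def)
  have sc0: "0 \<le> sc" using w0 v0 mu0 la0 by (simp add: sc_def)
  have bc0: "0 \<le> bc" and bcw: "bc \<le> w"
  proof -
    show "0 \<le> bc" using w0 by (simp add: bc_def)
    have "1 \<le> N * s" using N1 s1 by simp
    then have "1 \<le> real (N * s)" by linarith
    then have "1 \<le> 2 * real N * real s" by simp
    then have "w / (2 * real N * real s) \<le> w / 1" using w0 by (intro divide_left_mono) auto
    then show "bc \<le> w" by (simp add: bc_def)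
  qed
  have hH: "h k \<in> Hclass q arch c" if k: "k \<in> grid s N" for k
    unfolding h_def arch_def
  proof (rule net_in_H[OF q1 c s1 sd n1_def Rr _ R RB L3])
    show "n1 \<le> B" using n1B by (simp add: n1_def)
    show "w = c / real n1 powr inv_exp q" by (simp add: w_def i_def)
    show "0 \<le> bc" "bc \<le> w" by (rule bc0, rule bcw)
    show "\<forall>j<s. 0 \<le> ctr N k j \<and> ctr N k j \<le> 1" using ctr_bounds[OF N1 s1 k] by blast
  qed (simp_all add: v_def mu_def la_def i_def)
  have hb: "h k x = bump sc N s k x" for k x
  proof -
    have "h k x = real R * la * (real R * mu) ^ (L - 3) * relu (v * real Rr * (\<Sum>j<s. bc - w * \<bar>x j - ctr N k j\<bar>))"
      unfolding h_def arch_def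
      by (rule realize_net[OF s1 sd n1_def _ RB L3 w0 bc0 v0 mu0]) (use n1B in \<open>simp add: n1_def\<close>)
    also have "v * real Rr * (\<Sum>j<s. bc - w * \<bar>x j - ctr N k j\<bar>)
        = (v * real Rr * w) * (1 / (2 * real N) - (\<Sum>j<s. \<bar>x j - ctr N k j\<bar>))"
    proof -
      have "(\<Sum>j<s. bc - w * \<bar>x j - ctr N k j\<bar>) = real s * bc - w * (\<Sum>j<s. \<bar>x j - ctr N k j\<bar>)"
        by (simp add: sum_subtractf sum_distrib_left)
      also have "real s * bc = w * (1 / (2 * real N))" using s1 by (simp add: bc_def)
      finally have S: "(\<Sum>j<s. bc - w * \<bar>x j - ctr N k j\<bar>) = w * (1 / (2 * real N)) - w * (\<Sum>j<s. \<bar>x j - ctr N k j\<bar>)" .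
      show ?thesis unfolding S by (simp add: algebra_simps)
    qed
    also have "relu (v * real Rr * w * (1 / (2 * real N) - (\<Sum>j<s. \<bar>x j - ctr N k j\<bar>)))
        = v * real Rr * w * relu (1 / (2 * real N) - (\<Sum>j<s. \<bar>x j - ctr N k j\<bar>))"
      using v0 w0 by (intro relu_scale) simp
    finally show ?thesis by (simp add: bump_def sc_def mult.assoc)
  qed
  have "\<forall>k\<in>grid s N. \<exists>vk\<in>U. \<forall>x\<in>cube d. vk x = u0 x + c0 * h k x"
    using hyp hH by (auto simp: arch_def)
  then obtain V where VU: "\<forall>k\<in>grid s N. V k \<in> U" and Vx: "\<forall>k\<in>grid s N. \<forall>x\<in>cube d. V k x = u0 x + c0 * h k x"
    by metis
  have finK: "finite (grid s N)" by (simp add: grid_def finite_PiE)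
  have cardK: "card (grid s N) = N ^ s" by (simp add: grid_def card_PiE)
  have Kpos: "card (grid s N) > 0" using N1 by (simp add: cardK)
  have Km: "2 * m \<le> card (grid s N)" using Nm by (simp add: cardK)
  have UL': "\<forall>u\<in>U. u \<in> Lp_space p d" using UL by blast
  have agree: "\<forall>k\<in>grid s N. \<forall>x\<in>cube d. x \<notin> bsupp N s k \<longrightarrow> V k x = u0 x"
    using Vx by (simp add: hb bump_out)
  have disj: "\<forall>k\<in>grid s N. \<forall>k'\<in>grid s N. k \<noteq> k' \<longrightarrow> bsupp N s k \<inter> bsupp N s k' = {}"
    using bsupp_disj[OF N1] by blast
  define D where "D = c0 * (sc / (4 * real N)) * ((1 / (2 * real N * real s)) ^ s) powr ip"
  have D0: "0 \<le> D" using c0 sc0 by (simp add: D_def)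
  have Dk: "\<forall>k\<in>grid s N. ennreal D \<le> lp_dist p d u0 (V k)"
  proof
    fix k assume k: "k \<in> grid s N"
    note E = Ebox_props[OF N1 s1 sd k]
    have "ennreal (c0 * (sc / (4 * real N)) * measure (cube_measure d) (Ebox d N s k) powr inv_exp p)
        \<le> lp_norm p d (\<lambda>x. u0 x - V k x)"
    proof (rule lp_norm_lower[OF p1 E(2)])
      show "0 < measure (cube_measure d) (Ebox d N s k)" using N1 s1 by (simp add: E(3))
      show "0 \<le> c0 * (sc / (4 * real N))" using c0 sc0 by simp
      fix x assume x: "x \<in> Ebox d N s k"
      then have xc: "x \<in> cube d" using E(1) by blast
      have "sc / (4 * real N) \<le> bump sc N s k x" by (rule bump_Ebox[OF N1 s1 sc0 x sd])
      then have "c0 * (sc / (4 * real N)) \<le> c0 * bump sc N s k x" using c0 by (intro mult_left_mono) auto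
      then have "c0 * (sc / (4 * real N)) \<le> c0 * h k x" by (simp only: hb)
      moreover have "u0 x - V k x = - (c0 * h k x)" using Vx k xc by simp
      ultimately show "c0 * (sc / (4 * real N)) \<le> \<bar>u0 x - V k x\<bar>" by simp
    qed
    then show "ennreal D \<le> lp_dist p d u0 (V k)" by (simp add: D_def E(3) lp_dist_def ip_def)
  qed
  have errb: "ennreal (D / 4) \<le> err_MC TYPE('w) m U p d"
    unfolding err_MC_def
  proof (rule INF_greatest)
    fix x :: "'w measure \<times> _ \<times> _" assume x: "x \<in> Alg_MC m U p d"
    obtain P A mm where xe: "x = (P, A, mm)" by (cases x) auto
    have "ennreal (D / 4) \<le> mc_worst_error P A U p d"
      by (rule mc_bound[OF p1 finK Kpos Km UL' u0 VU agree disj Dk D0]) (use x xe in simp)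
    then show "ennreal (D / 4) \<le> (case x of (P, A, mm) \<Rightarrow> mc_worst_error P A U p d)" by (simp add: xe)
  qed
  have ip0: "0 \<le> ip" using inv_exp_range[OF p1] by (simp add: ip_def)
  have scb': "Om / real s \<le> sc" using scb by (simp add: sc_def la_def mu_def v_def w_def n1_def i_def)
  have "c0 * Om / (64 * real s) powr (1 + real s * ip) * real m powr (- ip - 1 / real s) \<le> D / 4"
    unfolding D_def by (rule final_ineq[OF c0 Om0 scb' s1 N1 Nb m1 ip0])
  then have "ennreal (c0 * Om / (64 * real s) powr (1 + real s * ip) * real m powr (- ip - 1 / real s)) \<le> ennreal (D / 4)"
    by (rule ennreal_leI)
  with errb show ?thesis by (simp add: ip_def)
qed

theorem theorem2p2:
  fixes L d B s m :: nat and p q :: ereal and c c0 :: real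
    and U :: "((nat \<Rightarrow> real) \<Rightarrow> real) set" and u0 :: "(nat \<Rightarrow> real) \<Rightarrow> real"
  assumes "L \<ge> 3" and "d \<ge> 1" and "B \<ge> 1" and "m \<ge> 1"
    and "1 \<le> p" and "1 \<le> q" and "c > 0" and "c0 > 0"
    and "\<forall>u\<in>U. continuous_on (cube d) u \<and> u \<in> Lp_space p d"
    and "u0 \<in> U"
    and "\<forall>h\<in>Hclass q (d # replicate (L - 1) B @ [1]) c.
           \<exists>v\<in>U. \<forall>x\<in>cube d. v x = u0 x + c0 * h x"
    and "1 \<le> s" and "real s \<le> real B / 3" and "s \<le> d"
  shows "(q \<le> 2 \<longrightarrow>
           err_MC TYPE('w) m U p d \<ge> ennreal (c0 *
             ((1 / (4 * 3 powr (2 * inv_exp q))) * c ^ L * real s powr (1 - 2 * inv_exp q))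
             / (64 * real s) powr (1 + real s * inv_exp p)
             * real m powr (- inv_exp p - 1 / real s)))
       \<and> (q \<ge> 2 \<longrightarrow>
           err_MC TYPE('w) m U p d \<ge> ennreal (c0 *
             ((1 / 24) * c ^ L * (real B powr (1 - 2 * inv_exp q)) ^ (L - 1))
             / (64 * real s) powr (1 + real s * inv_exp p)
             * real m powr (- inv_exp p - 1 / real s)))"
proof -
  note A = assms
  have s3B: "3 * s \<le> B"
  proof -
    have "real (3 * s) \<le> real B" using A(13) by simp
    then show ?thesis by (simp only: of_nat_le_iff)
  qed
  show ?thesis
  proof (intro conjI impI)
    assume q2: "q \<le> 2"
    show "err_MC TYPE('w) m U p d \<ge> ennreal (c0 *
             ((1 / (4 * 3 powr (2 * inv_exp q))) * c ^ L * real s powr (1 - 2 * inv_exp q))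
             / (64 * real s) powr (1 + real s * inv_exp p)
             * real m powr (- inv_exp p - 1 / real s))"
    proof (rule main_gen[where R = 1 and Rr = 1, OF A(1) A(4) A(5) A(6) A(7) A(8) A(9) A(10) A(11) A(12) A(14)])
      show "s * (3 * 1) \<le> B" using s3B by simp
      show "0 \<le> (1 / (4 * 3 powr (2 * inv_exp q))) * c ^ L * real s powr (1 - 2 * inv_exp q)"
        using A(7) by simp
      show "(1 / (4 * 3 powr (2 * inv_exp q))) * c ^ L * real s powr (1 - 2 * inv_exp q) / real s
        \<le> real 1 * (c / real 1 powr inv_exp q) * (real 1 * (c / real (1 * 1) powr inv_exp q)) ^ (L - 3)
         * ((c / real (1 * (s * (3 * 1))) powr inv_exp q) * real 1 * (c / real (s * (3 * 1)) powr inv_exp q))"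
        using scale_q_le2[OF A(7) A(12) A(1)] by simp
    qed (use A(3) in auto)
  next
    assume q2: "q \<ge> 2"
    have i: "0 \<le> inv_exp q" "inv_exp q \<le> 1/2" using inv_exp_range[OF A(6)] inv_exp_ge2[OF q2] by auto
    note RF = R1_facts[OF A(12) s3B]
    show "err_MC TYPE('w) m U p d \<ge> ennreal (c0 *
             ((1 / 24) * c ^ L * (real B powr (1 - 2 * inv_exp q)) ^ (L - 1))
             / (64 * real s) powr (1 + real s * inv_exp p)
             * real m powr (- inv_exp p - 1 / real s))"
    proof (rule main_gen[where R = B and Rr = "B div (3 * s)", OF A(1) A(4) A(5) A(6) A(7) A(8) A(9) A(10) A(11) A(12) A(14) RF(1) RF(3) A(3)])
      show "0 \<le> (1 / 24) * c ^ L * (real B powr (1 - 2 * inv_exp q)) ^ (L - 1)"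
        using A(7) by simp
      show "(1 / 24) * c ^ L * (real B powr (1 - 2 * inv_exp q)) ^ (L - 1) / real s
        \<le> real B * (c / real B powr inv_exp q) * (real B * (c / real (B * B) powr inv_exp q)) ^ (L - 3)
         * ((c / real (B * (s * (3 * (B div (3 * s))))) powr inv_exp q) * real (B div (3 * s))
            * (c / real (s * (3 * (B div (3 * s)))) powr inv_exp q))"
        using scale_q_ge2[OF A(7) A(12) A(1) s3B i] by simp
    qed simp
  qed
qed


end
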